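(* Let $\sigma>0$, $z_0\in\mathbb{R}^N$ and let $(\Psi_P)_{P\ge1}$ with $\Psi_P\in\mathbb{R}^{P\times N}$ be such that, for all $P>1$, $\Psi_P$ is obtained from $\Psi_{P+1}$ by deleting one row. For each $P$ let $\mu_0=\Psi_Pz_0$ and $Y=\mu_0+W$ with $W\sim\mathcal N(0,\sigma^2\mathrm{Id}_P)$. Let $\mathrm{ST}$ be the soft-thresholding ($\mathrm{ST}(y,\lambda)_i=y_i+\lambda$ if $y_i\le-\lambda$, $0$ if $-\lambda<y_i<\lambda$, $y_i-\lambda$ otherwise), with weak $\lambda$-derivative $\partial_\lambda\mathrm{ST}(y,\lambda)_i=0$ if $|y_i|\le\lambda$, $-\operatorname{sign}(y_i)$ otherwise. Define $$\nabla_2\widehat{\mathrm{df}}^{\mathrm{FD}}(y,\lambda,\epsilon)=\frac1\epsilon\sum_{i=1}^P\big(\partial_\lambda\mathrm{ST}(y+\epsilon e_i,\lambda)_i-\partial_\lambda\mathrm{ST}(y,\lambda)_i\big),$$ $$\mathrm{SUGAR}^{\mathrm{FD}}(y,\lambda,\epsilon)=2\,\partial_\lambda\mathrm{ST}(y,\lambda)^*(\mathrm{ST}(y,\lambda)-y)+2\sigma^2\nabla_2\widehat{\mathrm{df}}^{\mathrm{FD}}(y,\lambda,\epsilon),$$ the risk $R(\mu_0,\lambda)=\mathbb{E}_W\|\mathrm{ST}(Y,\lambda)-\mu_0\|^2$ and the degrees of freedom $\mathrm{df}(\mu_0,\lambda)=\sum_{i=1}^P\operatorname{cov}(Y_i,\mathrm{ST}(Y,\lambda)_i)/\sigma^2$.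 Take $\hat\epsilon(P)>0$ with $\lim_{P\to\infty}\hat\epsilon(P)=0$ and $\lim_{P\to\infty}P^{-1}\hat\epsilon(P)^{-1}=0$. Then for any Lebesgue point $\lambda>0$ (i.e. such that for all $(i,P)$, $\lambda\ne|Y_i|$ and $\lambda\ne|(Y+\hat\epsilon(P)e_i)_i|$), $$\operatorname*{plim}_{P\to\infty}\frac1P\Big(\mathrm{SUGAR}^{\mathrm{FD}}(Y,\lambda,\hat\epsilon(P))-\nabla_2R(\mu_0,\lambda)\Big)=0\quad\text{and}\quad\operatorname*{plim}_{P\to\infty}\frac1P\Big(\nabla_2\widehat{\mathrm{df}}^{\mathrm{FD}}(Y,\lambda,\hat\epsilon(P))-\nabla_2\mathrm{df}(\mu_0,\lambda)\Big)=0.$$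
   Context: $(e_i)$ is the canonical basis of $\mathbb{R}^P$; $\nabla_2$ denotes the (weak) derivative with respect to $\lambda$; $\operatorname{plim}$ denotes limit in probability. *)

theory Defs
  imports "HOL-Probability.Probability"
begin

definition ST :: "real \<Rightarrow> real \<Rightarrow> real" where
  "ST y l = (if y \<le> - l then y + l else if y < l then 0 else y - l)"

definition dST :: "real \<Rightarrow> real \<Rightarrow> real" where
  "dST y l = (if \<bar>y\<bar> \<le> l then 0 else - sgn y)"

text \<open>Vectors of R^P are functions on {..<P}.  Finite-difference derivative of df estimate.
  Note (y + eps e_i)_i = y i + eps.\<close>
definition grad_df_FD :: "nat \<Rightarrow> (nat \<Rightarrow> real) \<Rightarrow> real \<Rightarrow> real \<Rightarrow> real" where
  "grad_df_FD P y l eps = (1 / eps) * (\<Sum>i<P. dST (y i + eps) l - dST (y i) l)"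

definition SUGAR_FD :: "nat \<Rightarrow> real \<Rightarrow> (nat \<Rightarrow> real) \<Rightarrow> real \<Rightarrow> real \<Rightarrow> real" where
  "SUGAR_FD P \<sigma> y l eps =
     2 * (\<Sum>i<P. dST (y i) l * (ST (y i) l - y i)) + 2 * \<sigma>\<^sup>2 * grad_df_FD P y l eps"

definition noise :: "nat \<Rightarrow> real \<Rightarrow> (nat \<Rightarrow> real) measure" where
  "noise P \<sigma> = (\<Pi>\<^sub>M i\<in>{..<P}. density lborel (normal_density 0 \<sigma>))"

text \<open>Mean vector mu_0 = Psi_P z_0 (Psi as P x N matrix, entries Psi P i c).\<close>
definition mu0 :: "(nat \<Rightarrow> nat \<Rightarrow> nat \<Rightarrow> real) \<Rightarrow> nat \<Rightarrow> (nat \<Rightarrow> real) \<Rightarrow> nat \<Rightarrow> nat \<Rightarrow> real" where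
  "mu0 \<Psi> N z0 P i = (\<Sum>c<N. \<Psi> P i c * z0 c)"

definition risk :: "nat \<Rightarrow> real \<Rightarrow> (nat \<Rightarrow> real) \<Rightarrow> real \<Rightarrow> real" where
  "risk P \<sigma> \<mu> l = (\<integral>w. (\<Sum>i<P. (ST (\<mu> i + w i) l - \<mu> i)\<^sup>2) \<partial>noise P \<sigma>)"

definition cov :: "'a measure \<Rightarrow> ('a \<Rightarrow> real) \<Rightarrow> ('a \<Rightarrow> real) \<Rightarrow> real" where
  "cov M X Z = (\<integral>w. (X w - (\<integral>v. X v \<partial>M)) * (Z w - (\<integral>v. Z v \<partial>M)) \<partial>M)"

definition dof :: "nat \<Rightarrow> real \<Rightarrow> (nat \<Rightarrow> real) \<Rightarrow> real \<Rightarrow> real" where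
  "dof P \<sigma> \<mu> l = (\<Sum>i<P. cov (noise P \<sigma>) (\<lambda>w. \<mu> i + w i) (\<lambda>w. ST (\<mu> i + w i) l)) / \<sigma>\<^sup>2"

definition plim_zero :: "(nat \<Rightarrow> 'a measure) \<Rightarrow> (nat \<Rightarrow> 'a \<Rightarrow> real) \<Rightarrow> bool" where
  "plim_zero M X \<longleftrightarrow>
     (\<forall>e>0. (\<lambda>P. measure (M P) {w \<in> space (M P). \<bar>X P w\<bar> > e}) \<longlonglongrightarrow> 0)"

end

theory Submission
  imports Defs "HOL-Real_Asymp.Real_Asymp"
begin
lemma ST_nonneg_cases: "0 \<le> t \<Longrightarrow> ST y t = (if y < - t then y + t else if y \<le> t then 0 else y - t)"
  unfolding ST_def by auto

lemma ST_lip: "0 \<le> t \<Longrightarrow> 0 \<le> s \<Longrightarrow> \<bar>ST y t - ST y s\<bar> \<le> \<bar>t - s\<bar>"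
  unfolding ST_def by (auto simp: abs_if)

lemma ST_close: "0 \<le> t \<Longrightarrow> \<bar>ST y t - y\<bar> \<le> t"
  unfolding ST_def by (auto simp: abs_if)

lemma ST_meas[measurable]: "(\<lambda>y. ST y t) \<in> borel_measurable borel"
  unfolding ST_def by measurable

lemma dST_meas[measurable]: "(\<lambda>y. dST y t) \<in> borel_measurable borel"
  unfolding dST_def by measurable

lemma dST_bound: "\<bar>dST y t\<bar> \<le> 1"
  unfolding dST_def by (auto simp: sgn_if)

lemma ST_deriv:
  assumes "l > 0" "\<bar>y\<bar> \<noteq> l"
  shows "((\<lambda>t. ST y t) has_real_derivative dST y l) (at l)"
proof -
  consider "y > l" | "y < -l" | "\<bar>y\<bar> < l" using assms by linarith
  then show ?thesis
  proof cases
    case 1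
    have ev: "eventually (\<lambda>t. y - t = ST y t) (nhds l)"
      using eventually_nhds_in_open[of "{0<..<y}" l] 1 assms
      by (auto elim!: eventually_mono simp: ST_def)
    have "((\<lambda>t. y - t) has_real_derivative -1) (at l)" by (auto intro!: derivative_eq_intros)
    then show ?thesis using 1 assms by (subst (asm) DERIV_cong_ev[OF refl ev refl]) (simp add: dST_def)
  next
    case 2
    have ev: "eventually (\<lambda>t. y + t = ST y t) (nhds l)"
      using eventually_nhds_in_open[of "{0<..< -y}" l] 2 assms
      by (auto elim!: eventually_mono simp: ST_def)
    have "((\<lambda>t. y + t) has_real_derivative 1) (at l)" by (auto intro!: derivative_eq_intros)
    then show ?thesis using 2 assms by (subst (asm) DERIV_cong_ev[OF refl ev refl]) (simp add: dST_def)
  next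
    case 3
    have ev: "eventually (\<lambda>t. 0 = ST y t) (nhds l)"
      using eventually_nhds_in_open[of "{\<bar>y\<bar><..}" l] 3 assms
      by (auto elim!: eventually_mono simp: ST_def)
    have "((\<lambda>t. 0) has_real_derivative 0) (at l)" by (auto intro!: derivative_eq_intros)
    then show ?thesis using 3 assms by (subst (asm) DERIV_cong_ev[OF refl ev refl]) (simp add: dST_def)
  qed
qed

context fixes \<sigma> :: real assumes sig: "0 < \<sigma>"
begin

lemma phi_to0: "(normal_density 0 \<sigma> \<longlongrightarrow> 0) at_top"
  unfolding normal_density_def using sig by real_asymp

lemma phi_deriv: "(normal_density 0 \<sigma> has_real_derivative (- x / \<sigma>\<^sup>2 * normal_density 0 \<sigma> x)) (at x)"
  unfolding normal_density_def using sig
  by (auto intro!: derivative_eq_intros simp: field_simps power2_eq_square)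

lemma phi_le: "normal_density 0 \<sigma> x \<le> 1 / sqrt (2 * pi * \<sigma>\<^sup>2)"
  unfolding normal_density_def using sig by (auto simp: field_simps)

lemma aux_exp_bound: "\<bar>x\<bar> * exp (- x\<^sup>2 / (2 * \<sigma>\<^sup>2)) \<le> \<sigma>"
proof -
  have "1 + x\<^sup>2 / (2 * \<sigma>\<^sup>2) \<le> exp (x\<^sup>2 / (2 * \<sigma>\<^sup>2))" by (rule exp_ge_add_one_self)
  moreover have "\<bar>x\<bar> \<le> \<sigma> * (1 + x\<^sup>2 / (2 * \<sigma>\<^sup>2))"
  proof -
    have "0 \<le> (\<bar>x\<bar> - \<sigma>)\<^sup>2" by simp
    then have "2 * \<sigma> * \<bar>x\<bar> \<le> \<sigma>\<^sup>2 + x\<^sup>2" by (simp add: power2_eq_square algebra_simps)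
    moreover have "0 \<le> \<sigma>\<^sup>2" by simp
    ultimately have "\<bar>x\<bar> * (2 * \<sigma>) \<le> 2 * \<sigma>\<^sup>2 + x\<^sup>2" by (simp add: algebra_simps) (insert zero_le_power2[of \<sigma>], linarith)
    then have "\<bar>x\<bar> \<le> (2 * \<sigma>\<^sup>2 + x\<^sup>2) / (2 * \<sigma>)" using sig by (simp add: pos_le_divide_eq)
    moreover have "\<sigma> * (1 + x\<^sup>2 / (2 * \<sigma>\<^sup>2)) = (2 * \<sigma>\<^sup>2 + x\<^sup>2) / (2 * \<sigma>)" using sig by (simp add: field_simps power2_eq_square)
    ultimately show ?thesis by simp
  qed
  ultimately have "\<bar>x\<bar> \<le> \<sigma> * exp (x\<^sup>2 / (2 * \<sigma>\<^sup>2))"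
    using sig by (smt (verit) mult_left_mono)
  then have "\<bar>x\<bar> * exp (- x\<^sup>2 / (2 * \<sigma>\<^sup>2)) \<le> \<sigma> * exp (x\<^sup>2 / (2 * \<sigma>\<^sup>2)) * exp (- x\<^sup>2 / (2 * \<sigma>\<^sup>2))"
    by (simp add: mult_right_mono)
  also have "\<dots> = \<sigma>" by (simp add: mult.assoc flip: exp_add)
  finally show ?thesis .
qed

definition "Lphi = 1 / sqrt (2 * pi * \<sigma>\<^sup>2) / \<sigma>"

lemma phi_lip: "\<bar>normal_density 0 \<sigma> x - normal_density 0 \<sigma> y\<bar> \<le> Lphi * \<bar>x - y\<bar>"
proof -
  have "norm (normal_density 0 \<sigma> x - normal_density 0 \<sigma> y) \<le> Lphi * norm (x - y)"
  proof (rule field_differentiable_bound[where S=UNIV and f' = "\<lambda>x. - x / \<sigma>\<^sup>2 * normal_density 0 \<sigma> x"])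
    fix z :: real
    show "(normal_density 0 \<sigma> has_field_derivative - z / \<sigma>\<^sup>2 * normal_density 0 \<sigma> z) (at z within UNIV)"
      using phi_deriv by simp
    have "norm (- z / \<sigma>\<^sup>2 * normal_density 0 \<sigma> z) = 1 / sqrt (2 * pi * \<sigma>\<^sup>2) / \<sigma>\<^sup>2 * (\<bar>z\<bar> * exp (- z\<^sup>2 / (2 * \<sigma>\<^sup>2)))"
      unfolding normal_density_def by (simp add: abs_mult field_simps)
    also have "\<dots> \<le> 1 / sqrt (2 * pi * \<sigma>\<^sup>2) / \<sigma>\<^sup>2 * \<sigma>"
      by (intro mult_left_mono aux_exp_bound) auto
    also have "\<dots> = Lphi" unfolding Lphi_def using sig by (simp add: power2_eq_square)
    finally show "norm (- z / \<sigma>\<^sup>2 * normal_density 0 \<sigma> z) \<le> Lphi" .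
  qed auto
  then show ?thesis by simp
qed

lemma Lphi_pos: "Lphi > 0" unfolding Lphi_def using sig by simp

end

context fixes \<sigma> :: real assumes sig: "0 < \<sigma>"
begin

lemma phi_cont: "continuous_on S (\<lambda>x. normal_density 0 \<sigma> x * x)"
  unfolding normal_density_def using sig by (intro continuous_intros) auto

lemma tail_moment: "(\<integral>x. normal_density 0 \<sigma> x * x * indicator {a<..} x \<partial>lborel) = \<sigma>\<^sup>2 * normal_density 0 \<sigma> a"
proof -
  define F where "F x = - \<sigma>\<^sup>2 * normal_density 0 \<sigma> x" for x
  define f where "f x = normal_density 0 \<sigma> x * x" for x
  have dF: "(F has_real_derivative f x) (at x)" for x
    unfolding F_def f_def using phi_deriv[OF sig, of x] sig
    by (auto intro!: derivative_eq_intros simp: field_simps)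
  define c where "c = \<bar>a\<bar>"
  have ac: "a \<le> c" "0 \<le> c" unfolding c_def by auto
  have i1: "integral\<^sup>L lborel (\<lambda>x. indicator {a..c} x *\<^sub>R f x) = F c - F a"
    apply (rule integral_FTC_atLeastAtMost[OF ac(1)])
    subgoal for x using dF[of x] by (simp add: has_real_derivative_iff_has_vector_derivative has_vector_derivative_at_within)
    subgoal unfolding f_def by (rule phi_cont)
    done
  have "(\<integral>\<^sup>+x. ennreal (f x) * indicator {c ..} x \<partial>lborel) = 0 - F c"
  proof (rule nn_integral_FTC_atLeast)
    show "f \<in> borel_measurable borel" unfolding f_def by measurable
    show "\<And>x. c \<le> x \<Longrightarrow> (F has_real_derivative f x) (at x)" by (rule dF)
    show "\<And>x. c \<le> x \<Longrightarrow> 0 \<le> f x" using ac unfolding f_def by auto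
    show "(F \<longlongrightarrow> 0) at_top" unfolding F_def using tendsto_mult_left[OF phi_to0[OF sig], of "- \<sigma>\<^sup>2"] by simp
  qed
  then have hb: "has_bochner_integral lborel (\<lambda>x. f x * indicator {c ..} x) (0 - F c)"
  proof (intro has_bochner_integral_nn_integral)
    assume h: "(\<integral>\<^sup>+x. ennreal (f x) * indicator {c ..} x \<partial>lborel) = 0 - F c"
    show "(\<lambda>x. f x * indicator {c..} x) \<in> borel_measurable lborel" unfolding f_def by measurable
    show "AE x in lborel. 0 \<le> f x * indicator {c..} x" using ac sig unfolding f_def by (auto split: split_indicator)
    show "0 \<le> 0 - F c" unfolding F_def by simp
    show "(\<integral>\<^sup>+x. ennreal (f x * indicator {c..} x) \<partial>lborel) = ennreal (0 - F c)"
      unfolding h[symmetric] by (intro nn_integral_cong) (auto split: split_indicator)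
  qed
  have intf: "integrable lborel f" unfolding f_def by (rule integrable_normal_moment_nz_1) (rule sig)
  have AE: "AE x in lborel. x \<noteq> a \<and> x \<noteq> c"
    using AE_lborel_singleton[of a] AE_lborel_singleton[of c] by eventually_elim auto
  have "(\<integral>x. normal_density 0 \<sigma> x * x * indicator {a<..} x \<partial>lborel)
      = (\<integral>x. indicator {a..c} x *\<^sub>R f x + f x * indicator {c ..} x \<partial>lborel)"
    apply (rule integral_cong_AE)
    subgoal by measurable
    subgoal unfolding f_def by measurable
    using AE by eventually_elim (use ac in \<open>auto simp: f_def split: split_indicator\<close>)
  also have "\<dots> = integral\<^sup>L lborel (\<lambda>x. indicator {a..c} x *\<^sub>R f x) + integral\<^sup>L lborel (\<lambda>x. f x * indicator {c ..} x)"
    by (rule Bochner_Integration.integral_add) (use integrable_mult_indicator[of "{a..c}" lborel f] intf integrable.intros[OF hb] in auto)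
  also have "\<dots> = (F c - F a) + (0 - F c)"
    using i1 by (simp add: has_bochner_integral_integral_eq[OF hb])
  also have "\<dots> = \<sigma>\<^sup>2 * normal_density 0 \<sigma> a" unfolding F_def by simp
  finally show ?thesis .
qed

end

context fixes \<sigma> :: real assumes sig: "0 < \<sigma>"
begin

lemma lower_moment: "(\<integral>x. normal_density 0 \<sigma> x * x * indicator {..<b} x \<partial>lborel) = - (\<sigma>\<^sup>2 * normal_density 0 \<sigma> b)"
proof -
  have intf: "integrable lborel (\<lambda>x. normal_density 0 \<sigma> x * x)"
    by (rule integrable_normal_moment_nz_1) (rule sig)
  have z: "(\<integral>x. normal_density 0 \<sigma> x * x \<partial>lborel) = 0"
    using integral_normal_moment_nz_1[of \<sigma> 0] sig by simp
  have AE: "AE x in lborel. x \<noteq> b" by (rule AE_lborel_singleton)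
  have "(\<integral>x. normal_density 0 \<sigma> x * x * indicator {..<b} x \<partial>lborel)
      = (\<integral>x. normal_density 0 \<sigma> x * x - normal_density 0 \<sigma> x * x * indicator {b<..} x \<partial>lborel)"
    apply (rule integral_cong_AE)
    subgoal by measurable
    subgoal by measurable
    using AE by eventually_elim (auto split: split_indicator)
  also have "\<dots> = 0 - \<sigma>\<^sup>2 * normal_density 0 \<sigma> b"
    by (subst Bochner_Integration.integral_diff)
       (auto intro!: integrable_real_mult_indicator intf simp: z tail_moment[OF sig])
  finally show ?thesis by simp
qed

lemma indicator_integrable_bounded:
  assumes "S \<in> sets borel" "S \<subseteq> {c - e..c}" "0 \<le> e"
  shows "integrable lborel (indicator S :: real \<Rightarrow> real)"
proof -
  have "emeasure lborel S \<le> emeasure lborel {c - e..c}" using assms by (intro emeasure_mono) auto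
  also have "\<dots> < \<infinity>" using assms by simp
  finally show ?thesis using assms by (simp add: integrable_indicator_iff)
qed

lemma interval_approx:
  assumes S: "S \<in> sets borel" "S \<subseteq> {c - e..c}" "measure lborel S = e" "0 \<le> e"
  shows "\<bar>(\<integral>x. normal_density 0 \<sigma> x * indicator S x \<partial>lborel) - e * normal_density 0 \<sigma> c\<bar> \<le> Lphi \<sigma> * e\<^sup>2"
proof -
  have iS: "integrable lborel (indicator S :: real \<Rightarrow> real)" using indicator_integrable_bounded[OF S(1,2,4)] .
  have iP: "integrable lborel (\<lambda>x. normal_density 0 \<sigma> x * indicator S x)"
    using S(1) sig by (intro integrable_real_mult_indicator) (auto intro: integrable_normal_density)
  have "(\<integral>x. normal_density 0 \<sigma> x * indicator S x \<partial>lborel) - e * normal_density 0 \<sigma> c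
      = (\<integral>x. normal_density 0 \<sigma> x * indicator S x - normal_density 0 \<sigma> c * indicator S x \<partial>lborel)"
    using iS iP S by (simp add: Bochner_Integration.integral_diff)
  also have "\<bar>\<dots>\<bar> \<le> (\<integral>x. Lphi \<sigma> * e * indicator S x \<partial>lborel)"
  proof (rule integral_abs_bound_integral)
    show "integrable lborel (\<lambda>x. normal_density 0 \<sigma> x * indicator S x - normal_density 0 \<sigma> c * indicator S x)"
      using iS iP by auto
    show "integrable lborel (\<lambda>x. Lphi \<sigma> * e * indicator S x)" using iS by auto
    fix x
    show "\<bar>normal_density 0 \<sigma> x * indicator S x - normal_density 0 \<sigma> c * indicator S x\<bar> \<le> Lphi \<sigma> * e * indicator S x"
    proof (cases "x \<in> S")
      case True
      then have "\<bar>x - c\<bar> \<le> e" using S by auto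
      then have "Lphi \<sigma> * \<bar>x - c\<bar> \<le> Lphi \<sigma> * e" using Lphi_pos[OF sig] by (intro mult_left_mono) auto
      then show ?thesis using True phi_lip[OF sig, of x c] by simp
    qed simp
  qed
  also have "\<dots> = Lphi \<sigma> * e\<^sup>2" using S by (simp add: power2_eq_square)
  finally show ?thesis .
qed

lemma interval_upper:
  assumes S: "S \<in> sets borel" "S \<subseteq> {c - e..c}" "measure lborel S = e" "0 \<le> e"
  shows "(\<integral>x. normal_density 0 \<sigma> x * indicator S x \<partial>lborel) \<le> e / sqrt (2 * pi * \<sigma>\<^sup>2)"
proof -
  have iS: "integrable lborel (indicator S :: real \<Rightarrow> real)" using indicator_integrable_bounded[OF S(1,2,4)] .
  have "(\<integral>x. normal_density 0 \<sigma> x * indicator S x \<partial>lborel) \<le> (\<integral>x. 1 / sqrt (2 * pi * \<sigma>\<^sup>2) * indicator S x \<partial>lborel)"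
    apply (rule integral_mono)
    subgoal using S(1) sig by (intro integrable_real_mult_indicator) (auto intro: integrable_normal_density)
    subgoal using iS by auto
    subgoal for x using phi_le[OF sig, of x] by (auto split: split_indicator)
    done
  also have "\<dots> = e / sqrt (2 * pi * \<sigma>\<^sup>2)" using S by simp
  finally show ?thesis .
qed

end

abbreviation "G \<sigma> \<equiv> density lborel (normal_density 0 \<sigma>)"

context fixes \<sigma> :: real assumes sig: "0 < \<sigma>"
begin

lemma G_prob: "prob_space (G \<sigma>)" using prob_space_normal_density sig by auto

lemma G_int: "(f::real\<Rightarrow>real) \<in> borel_measurable borel \<Longrightarrow> integral\<^sup>L (G \<sigma>) f = (\<integral>x. normal_density 0 \<sigma> x * f x \<partial>lborel)"
  by (subst integral_density) auto

lemma G_integrable: "(f::real\<Rightarrow>real) \<in> borel_measurable borel \<Longrightarrow> integrable (G \<sigma>) f \<longleftrightarrow> integrable lborel (\<lambda>x. normal_density 0 \<sigma> x * f x)"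
  by (subst integrable_density) auto

lemma G_bounded_integrable: "(f::real\<Rightarrow>real) \<in> borel_measurable borel \<Longrightarrow> (\<And>x. \<bar>f x\<bar> \<le> (B::real)) \<Longrightarrow> integrable (G \<sigma>) f"
proof -
  assume f: "f \<in> borel_measurable borel" and b: "\<And>x. \<bar>f x\<bar> \<le> B"
  interpret prob_space "G \<sigma>" by (rule G_prob)
  show ?thesis by (rule integrable_const_bound[where B=B]) (use f b in auto)
qed

lemma G_x2: "integrable (G \<sigma>) (\<lambda>x. x\<^sup>2)"
  using integrable_normal_moment[of \<sigma> 0 2] sig by (subst G_integrable) auto

lemma G_x: "integrable (G \<sigma>) (\<lambda>x. x)"
  using integrable_normal_moment_nz_1[of \<sigma> 0] sig by (subst G_integrable) (auto simp: mult.commute)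

lemma G_absx: "integrable (G \<sigma>) (\<lambda>x. \<bar>x\<bar>)"
  using G_x by (rule integrable_abs)

lemma G_mean: "integral\<^sup>L (G \<sigma>) (\<lambda>x. x) = 0"
  using integral_normal_moment_nz_1[of \<sigma> 0] sig by (subst G_int) (auto simp: mult.commute)

lemma noise_prob: "prob_space (noise P \<sigma>)"
  unfolding noise_def by (rule prob_space_PiM) (rule G_prob)

lemma noise_distr: "i < P \<Longrightarrow> distr (noise P \<sigma>) (G \<sigma>) (\<lambda>w. w i) = G \<sigma>"
  unfolding noise_def by (rule distr_PiM_component) (auto intro: G_prob)

lemma noise_comp_meas: "i < P \<Longrightarrow> (\<lambda>w. w i) \<in> measurable (noise P \<sigma>) (G \<sigma>)"
  unfolding noise_def by (rule measurable_component_singleton) auto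

lemma G_meas: "(f::real\<Rightarrow>real) \<in> borel_measurable borel \<Longrightarrow> f \<in> borel_measurable (G \<sigma>)"
  by (simp add: measurable_cong_sets[OF sets_density refl] cong: measurable_cong_sets)

lemma noise_comp_int:
  assumes "i < P" "(f::real\<Rightarrow>real) \<in> borel_measurable borel"
  shows "(\<integral>w. f (w i) \<partial>noise P \<sigma>) = integral\<^sup>L (G \<sigma>) f"
proof -
  have "integral\<^sup>L (G \<sigma>) f = integral\<^sup>L (distr (noise P \<sigma>) (G \<sigma>) (\<lambda>w. w i)) f"
    using noise_distr[OF assms(1)] by simp
  also have "\<dots> = (\<integral>w. f (w i) \<partial>noise P \<sigma>)"
    by (rule integral_distr[OF noise_comp_meas[OF assms(1)] G_meas[OF assms(2)]])
  finally show ?thesis by simp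
qed

lemma noise_comp_integrable:
  assumes "i < P" "(f::real\<Rightarrow>real) \<in> borel_measurable borel"
  shows "integrable (noise P \<sigma>) (\<lambda>w. f (w i)) \<longleftrightarrow> integrable (G \<sigma>) f"
proof -
  have "integrable (G \<sigma>) f = integrable (distr (noise P \<sigma>) (G \<sigma>) (\<lambda>w. w i)) f"
    using noise_distr[OF assms(1)] by simp
  also have "\<dots> = integrable (noise P \<sigma>) (\<lambda>w. f (w i))"
    by (rule integrable_distr_eq[OF noise_comp_meas[OF assms(1)] G_meas[OF assms(2)]])
  finally show ?thesis by simp
qed

lemma noise_comp_meas2: "i < P \<Longrightarrow> (f::real\<Rightarrow>real) \<in> borel_measurable borel \<Longrightarrow> (\<lambda>w. f (w i)) \<in> borel_measurable (noise P \<sigma>)"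
  by (rule measurable_compose[OF noise_comp_meas G_meas])

end

context fixes \<sigma> :: real assumes sig: "0 < \<sigma>"
begin

lemma G_mean_bound:
  assumes "(F::real\<Rightarrow>real) \<in> borel_measurable borel" "\<And>x. \<bar>F x\<bar> \<le> B"
  shows "\<bar>integral\<^sup>L (G \<sigma>) F\<bar> \<le> B"
proof -
  interpret prob_space "G \<sigma>" by (rule G_prob[OF sig])
  have pU: "prob UNIV = 1" using prob_space by simp
  have iF: "integrable (G \<sigma>) F" by (rule G_bounded_integrable[OF sig assms])
  have "\<bar>integral\<^sup>L (G \<sigma>) F\<bar> \<le> (\<integral>x. B \<partial>G \<sigma>)"
    by (rule integral_abs_bound_integral) (use iF assms in auto)
  also have "\<dots> = B" by (simp add: pU)
  finally show ?thesis .
qed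

lemma G_var_le:
  assumes "(F::real\<Rightarrow>real) \<in> borel_measurable borel" "\<And>x. \<bar>F x\<bar> \<le> B"
  shows "integral\<^sup>L (G \<sigma>) (\<lambda>x. (F x - integral\<^sup>L (G \<sigma>) F) * (F x - integral\<^sup>L (G \<sigma>) F)) \<le> integral\<^sup>L (G \<sigma>) (\<lambda>x. (F x)\<^sup>2)"
proof -
  interpret prob_space "G \<sigma>" by (rule G_prob[OF sig])
  have pU: "prob UNIV = 1" using prob_space by simp
  define m where "m = integral\<^sup>L (G \<sigma>) F"
  have iF: "integrable (G \<sigma>) F" by (rule G_bounded_integrable[OF sig assms])
  have iF2: "integrable (G \<sigma>) (\<lambda>x. (F x)\<^sup>2)"
    by (rule G_bounded_integrable[OF sig, where B="B\<^sup>2"]) (use assms in \<open>auto simp: abs_le_square_iff[symmetric]\<close>, 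
        metis abs_ge_zero abs_le_square_iff abs_of_nonneg assms(2) order.trans power2_abs)
  have "(\<lambda>x. (F x - m) * (F x - m)) = (\<lambda>x. (F x)\<^sup>2 - (2 * m * F x - m * m))"
    by (auto simp: power2_eq_square algebra_simps)
  then have "integral\<^sup>L (G \<sigma>) (\<lambda>x. (F x - m) * (F x - m)) = integral\<^sup>L (G \<sigma>) (\<lambda>x. (F x)\<^sup>2) - (2 * m * m - m * m)"
    using iF iF2 by (simp add: Bochner_Integration.integral_diff pU m_def)
  also have "\<dots> \<le> integral\<^sup>L (G \<sigma>) (\<lambda>x. (F x)\<^sup>2)" by simp
  finally show ?thesis unfolding m_def .
qed

end

lemma prod_two:
  fixes h :: "nat \<Rightarrow> real"
  assumes "finite A" "i \<in> A" "j \<in> A" "i \<noteq> j" "\<And>k. k \<in> A \<Longrightarrow> k \<noteq> i \<Longrightarrow> k \<noteq> j \<Longrightarrow> h k = 1"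
  shows "(\<Prod>k\<in>A. h k) = h i * h j"
proof -
  have e1: "(\<Prod>k\<in>A. h k) = h i * (\<Prod>k\<in>A - {i}. h k)" by (rule prod.remove) (use assms in auto)
  have e2: "(\<Prod>k\<in>A - {i}. h k) = h j * (\<Prod>k\<in>A - {i} - {j}. h k)" by (rule prod.remove) (use assms in auto)
  have e3: "(\<Prod>k\<in>A - {i} - {j}. h k) = 1" using assms by (intro prod.neutral) auto
  show ?thesis using e1 e2 e3 by simp
qed

context fixes \<sigma> :: real assumes sig: "0 < \<sigma>"
begin

lemma cross_zero:
  fixes Z :: "nat \<Rightarrow> real \<Rightarrow> real"
  assumes meas: "\<And>k. Z k \<in> borel_measurable borel" and bnd: "\<And>k x. \<bar>Z k x\<bar> \<le> B"
    and z: "\<And>k. integral\<^sup>L (G \<sigma>) (Z k) = 0"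
    and ij: "i < P" "j < P" "i \<noteq> j"
  shows "(\<integral>w. Z i (w i) * Z j (w j) \<partial>noise P \<sigma>) = 0"
proof -
  interpret Gp: prob_space "G \<sigma>" by (rule G_prob[OF sig])
  interpret PP: product_prob_space "\<lambda>_::nat. G \<sigma>" "{..<P}"
    by (intro product_prob_space.intro product_sigma_finite.intro product_prob_space_axioms.intro
        Gp.sigma_finite_measure_axioms G_prob[OF sig])
  define h where "h k = (if k = i then Z i else if k = j then Z j else (\<lambda>_. 1))" for k
  have ih: "integrable (G \<sigma>) (h k)" for k
    unfolding h_def using G_bounded_integrable[OF sig meas bnd] by auto
  have "(\<integral>w. Z i (w i) * Z j (w j) \<partial>noise P \<sigma>) = (\<integral>w. (\<Prod>k\<in>{..<P}. h k (w k)) \<partial>noise P \<sigma>)"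
  proof (rule Bochner_Integration.integral_cong[OF refl])
    fix w
    have "(\<Prod>k\<in>{..<P}. h k (w k)) = h i (w i) * h j (w j)"
      by (rule prod_two) (use ij in \<open>auto simp: h_def\<close>)
    then show "Z i (w i) * Z j (w j) = (\<Prod>k\<in>{..<P}. h k (w k))" using ij by (simp add: h_def)
  qed
  also have "\<dots> = (\<Prod>k\<in>{..<P}. integral\<^sup>L (G \<sigma>) (h k))"
    unfolding noise_def by (rule PP.product_integral_prod) (auto intro: ih)
  also have "\<dots> = 0"
    by (rule prod_zero) (use ij z in \<open>auto simp: h_def\<close>)
  finally show ?thesis .
qed

lemma conc:
  fixes F :: "nat \<Rightarrow> real \<Rightarrow> real" and B c :: real
  assumes meas: "\<And>i. F i \<in> borel_measurable borel" and bnd: "\<And>i x. \<bar>F i x\<bar> \<le> B" and c: "c > 0"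
  shows "measure (noise P \<sigma>) {w \<in> space (noise P \<sigma>). c \<le> \<bar>\<Sum>i<P. F i (w i) - integral\<^sup>L (G \<sigma>) (F i)\<bar>}
     \<le> (\<Sum>i<P. integral\<^sup>L (G \<sigma>) (\<lambda>x. (F i x)\<^sup>2)) / c\<^sup>2"
proof -
  interpret N: prob_space "noise P \<sigma>" by (rule noise_prob[OF sig])
  define m where "m i = integral\<^sup>L (G \<sigma>) (F i)" for i
  define Z where "Z i x = F i x - m i" for i x
  have Zm[measurable]: "Z i \<in> borel_measurable borel" for i unfolding Z_def using meas by measurable
  have mb: "\<bar>m i\<bar> \<le> B" for i unfolding m_def by (rule G_mean_bound[OF sig meas bnd])
  have Zb: "\<bar>Z i x\<bar> \<le> 2 * B" for i x unfolding Z_def using bnd[of i x] mb[of i] by linarith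
  have Z0: "integral\<^sup>L (G \<sigma>) (Z i) = 0" for i
  proof -
    interpret Gp: prob_space "G \<sigma>" by (rule G_prob[OF sig])
    have pU: "measure (G \<sigma>) UNIV = 1" using Gp.prob_space by simp
    show ?thesis unfolding Z_def m_def
      using G_bounded_integrable[OF sig meas bnd] by (simp add: Bochner_Integration.integral_diff pU)
  qed
  define S where "S w = (\<Sum>i<P. Z i (w i))" for w
  have compm: "(\<lambda>w. Z i (w i)) \<in> borel_measurable (noise P \<sigma>)" if "i < P" for i
    by (rule noise_comp_meas2[OF sig that Zm])
  have intZZ: "integrable (noise P \<sigma>) (\<lambda>w. Z i (w i) * Z j (w j))" if "i < P" "j < P" for i j
  proof (rule N.integrable_const_bound[where B="2*B*(2*B)"])
    show "AE x in noise P \<sigma>. norm (Z i (x i) * Z j (x j)) \<le> 2 * B * (2 * B)"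
    proof (intro AE_I2)
      fix x
      have "0 \<le> 2 * B" using Zb[of 0 0] by linarith
      then show "norm (Z i (x i) * Z j (x j)) \<le> 2 * B * (2 * B)"
        using mult_mono[OF Zb Zb, of i "x i" j "x j"] by (simp add: abs_mult mult.commute)
    qed
    show "(\<lambda>w. Z i (w i) * Z j (w j)) \<in> borel_measurable (noise P \<sigma>)"
      using compm[OF that(1)] compm[OF that(2)] by measurable
  qed
  have S2: "(S w)\<^sup>2 = (\<Sum>i<P. \<Sum>j<P. Z i (w i) * Z j (w j))" for w
    unfolding S_def power2_eq_square by (simp add: sum_product)
  have intS2: "integrable (noise P \<sigma>) (\<lambda>w. (S w)\<^sup>2)"
    unfolding S2 by (intro Bochner_Integration.integrable_sum intZZ) auto
  have "(\<integral>w. (S w)\<^sup>2 \<partial>noise P \<sigma>) = (\<Sum>i<P. \<Sum>j<P. (\<integral>w. Z i (w i) * Z j (w j) \<partial>noise P \<sigma>))"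
    unfolding S2
    apply (subst Bochner_Integration.integral_sum)
    subgoal by (auto intro!: Bochner_Integration.integrable_sum intZZ)
    apply (rule sum.cong[OF refl])
    apply (subst Bochner_Integration.integral_sum)
    subgoal by (auto intro!: intZZ)
    by simp
  also have "\<dots> = (\<Sum>i<P. (\<integral>w. Z i (w i) * Z i (w i) \<partial>noise P \<sigma>))"
  proof (rule sum.cong[OF refl])
    fix i assume i: "i \<in> {..<P}"
    have "(\<Sum>j<P. (\<integral>w. Z i (w i) * Z j (w j) \<partial>noise P \<sigma>)) = (\<Sum>j<P. if j = i then (\<integral>w. Z i (w i) * Z i (w i) \<partial>noise P \<sigma>) else 0)"
      by (rule sum.cong[OF refl]) (use i cross_zero[where Z=Z, OF Zm Zb Z0] in auto)
    also have "\<dots> = (\<integral>w. Z i (w i) * Z i (w i) \<partial>noise P \<sigma>)" using i by simp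
    finally show "(\<Sum>j<P. (\<integral>w. Z i (w i) * Z j (w j) \<partial>noise P \<sigma>)) = (\<integral>w. Z i (w i) * Z i (w i) \<partial>noise P \<sigma>)" .
  qed
  also have "\<dots> \<le> (\<Sum>i<P. integral\<^sup>L (G \<sigma>) (\<lambda>x. (F i x)\<^sup>2))"
  proof (rule sum_mono)
    fix i assume i: "i \<in> {..<P}"
    have "(\<integral>w. Z i (w i) * Z i (w i) \<partial>noise P \<sigma>) = integral\<^sup>L (G \<sigma>) (\<lambda>x. Z i x * Z i x)"
      using i by (intro noise_comp_int[OF sig, of i P "\<lambda>x. Z i x * Z i x"]) auto
    also have "\<dots> \<le> integral\<^sup>L (G \<sigma>) (\<lambda>x. (F i x)\<^sup>2)"
      unfolding Z_def m_def by (rule G_var_le[OF sig meas bnd])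
    finally show "(\<integral>w. Z i (w i) * Z i (w i) \<partial>noise P \<sigma>) \<le> integral\<^sup>L (G \<sigma>) (\<lambda>x. (F i x)\<^sup>2)" .
  qed
  finally have ES: "(\<integral>w. (S w)\<^sup>2 \<partial>noise P \<sigma>) \<le> (\<Sum>i<P. integral\<^sup>L (G \<sigma>) (\<lambda>x. (F i x)\<^sup>2))" .
  have seteq: "{w \<in> space (noise P \<sigma>). c \<le> \<bar>\<Sum>i<P. F i (w i) - integral\<^sup>L (G \<sigma>) (F i)\<bar>}
      = {w \<in> space (noise P \<sigma>). (S w)\<^sup>2 \<ge> c\<^sup>2}"
  proof -
    have "c \<le> \<bar>S w\<bar> \<longleftrightarrow> c\<^sup>2 \<le> (S w)\<^sup>2" for w
      using abs_le_square_iff[of c "S w"] c by simp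
    then show ?thesis unfolding S_def Z_def m_def by auto
  qed
  have "measure (noise P \<sigma>) {w \<in> space (noise P \<sigma>). (S w)\<^sup>2 \<ge> c\<^sup>2} \<le> (\<integral>w. (S w)\<^sup>2 \<partial>noise P \<sigma>) / c\<^sup>2"
    by (rule integral_Markov_inequality_measure[OF intS2, where A="space (noise P \<sigma>)"]) (use c in auto)
  also have "\<dots> \<le> (\<Sum>i<P. integral\<^sup>L (G \<sigma>) (\<lambda>x. (F i x)\<^sup>2)) / c\<^sup>2"
    using ES c by (intro divide_right_mono) auto
  finally show ?thesis unfolding seteq .
qed

end

lemma DCT_deriv:
  fixes f :: "real \<Rightarrow> 'a \<Rightarrow> real" and M and l \<delta> :: real and H f' :: "'a \<Rightarrow> real"
  assumes meas: "\<And>t. f t \<in> borel_measurable M" and f'm: "f' \<in> borel_measurable M"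
    and int: "\<And>t. \<bar>t - l\<bar> < \<delta> \<Longrightarrow> integrable M (f t)"
    and H: "integrable M H"
    and lip: "\<And>t x. \<bar>t - l\<bar> < \<delta> \<Longrightarrow> x \<in> space M \<Longrightarrow> \<bar>f t x - f l x\<bar> \<le> \<bar>t - l\<bar> * H x"
    and der: "AE x in M. ((\<lambda>t. f t x) has_real_derivative f' x) (at l)"
    and \<delta>: "\<delta> > 0"
  shows "((\<lambda>t. \<integral>x. f t x \<partial>M) has_real_derivative (\<integral>x. f' x \<partial>M)) (at l)"
  unfolding has_field_derivative_iff tendsto_at_iff_sequentially
proof (intro allI impI)
  fix X :: "nat \<Rightarrow> real"
  assume Xne: "\<forall>i. X i \<in> UNIV - {l}" and Xl: "X \<longlonglongrightarrow> l"
  have evd: "eventually (\<lambda>n. \<bar>X n - l\<bar> < \<delta>) sequentially"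
  proof -
    have "eventually (\<lambda>n. dist (X n) l < \<delta>) sequentially" using Xl \<delta> by (rule tendstoD)
    then show ?thesis by (simp add: dist_real_def)
  qed
  define s where "s n x = (if \<bar>X n - l\<bar> < \<delta> then (f (X n) x - f l x) / (X n - l) else 0)" for n x
  have sm: "s n \<in> borel_measurable M" for n unfolding s_def using meas by measurable
  have lim: "(\<lambda>n. integral\<^sup>L M (s n)) \<longlonglongrightarrow> integral\<^sup>L M f'"
  proof (rule integral_dominated_convergence[where w=H])
    show "f' \<in> borel_measurable M" by (rule f'm)
    show "s n \<in> borel_measurable M" for n by (rule sm)
    show "integrable M H" by (rule H)
    show "AE x in M. norm (s n x) \<le> H x" for n
    proof (rule AE_I2)
      fix x assume x: "x \<in> space M"
      show "norm (s n x) \<le> H x"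
      proof (cases "\<bar>X n - l\<bar> < \<delta>")
        case True
        have ne: "X n - l \<noteq> 0" using Xne by auto
        have "\<bar>f (X n) x - f l x\<bar> \<le> \<bar>X n - l\<bar> * H x" by (rule lip[OF True x])
        then show ?thesis using True ne by (simp add: s_def abs_divide divide_le_eq mult.commute)
      next
        case False
        have "0 \<le> \<bar>f (l + \<delta>/2) x - f l x\<bar>" by simp
        also have "\<dots> \<le> \<bar>(l + \<delta>/2) - l\<bar> * H x" using lip[of "l + \<delta>/2" x] \<delta> x by simp
        finally have "0 \<le> H x" using \<delta> by (simp add: zero_le_mult_iff)
        then show ?thesis using False by (simp add: s_def)
      qed
    qed
    show "AE x in M. (\<lambda>n. s n x) \<longlonglongrightarrow> f' x"
      using der
    proof eventually_elim
      case (elim x)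
      then have "((\<lambda>t. (f t x - f l x) / (t - l)) \<longlongrightarrow> f' x) (at l)"
        by (simp add: has_field_derivative_iff)
      then have "((\<lambda>t. (f t x - f l x) / (t - l)) \<circ> X) \<longlonglongrightarrow> f' x"
        using Xne Xl unfolding tendsto_at_iff_sequentially by blast
      then show ?case
        by (rule Lim_transform_eventually) (use evd in \<open>auto elim!: eventually_mono simp: s_def\<close>)
    qed
  qed
  show "((\<lambda>t. ((\<integral>x. f t x \<partial>M) - (\<integral>x. f l x \<partial>M)) / (t - l)) \<circ> X) \<longlonglongrightarrow> integral\<^sup>L M f'"
  proof (rule Lim_transform_eventually[OF lim])
    show "eventually (\<lambda>n. integral\<^sup>L M (s n) = ((\<lambda>t. ((\<integral>x. f t x \<partial>M) - (\<integral>x. f l x \<partial>M)) / (t - l)) \<circ> X) n) sequentially"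
      using evd
    proof (rule eventually_mono)
      fix n assume n: "\<bar>X n - l\<bar> < \<delta>"
      have "integral\<^sup>L M (s n) = (\<integral>x. (f (X n) x - f l x) / (X n - l) \<partial>M)"
        unfolding s_def using n by simp
      also have "\<dots> = ((\<integral>x. f (X n) x \<partial>M) - (\<integral>x. f l x \<partial>M)) / (X n - l)"
        using int[OF n] int[of l] \<delta> by simp
      finally show "integral\<^sup>L M (s n) = ((\<lambda>t. ((\<integral>x. f t x \<partial>M) - (\<integral>x. f l x \<partial>M)) / (t - l)) \<circ> X) n"
        by simp
    qed
  qed
qed

lemma ST_meas'[measurable (raw)]: "f \<in> borel_measurable M \<Longrightarrow> (\<lambda>x. ST (f x) t) \<in> borel_measurable M"
  using measurable_compose[OF _ ST_meas] by blast
lemma dST_meas'[measurable (raw)]: "f \<in> borel_measurable M \<Longrightarrow> (\<lambda>x. dST (f x) t) \<in> borel_measurable M"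
  using measurable_compose[OF _ dST_meas] by blast

context fixes \<sigma> :: real assumes sig: "0 < \<sigma>"
begin

lemma AE_G: "AE x in lborel. P x \<Longrightarrow> AE x in G \<sigma>. P x"
  by (subst AE_density) (auto elim: eventually_mono)

lemma AE_G_ne: "AE x in G \<sigma>. \<bar>\<mu> + x\<bar> \<noteq> l"
proof (rule AE_G)
  show "AE x in lborel. \<bar>\<mu> + x\<bar> \<noteq> l"
    using AE_lborel_singleton[of "l - \<mu>"] AE_lborel_singleton[of "- l - \<mu>"]
    by eventually_elim (auto simp: abs_if split: if_splits)
qed

lemma G_integrable_bound:
  "(f::real\<Rightarrow>real) \<in> borel_measurable borel \<Longrightarrow> integrable (G \<sigma>) g \<Longrightarrow> (\<And>x. \<bar>f x\<bar> \<le> g x) \<Longrightarrow> integrable (G \<sigma>) f"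
proof -
  assume f: "f \<in> borel_measurable borel" and g: "integrable (G \<sigma>) g" and b: "\<And>x. \<bar>f x\<bar> \<le> g x"
  show ?thesis
  proof (rule Bochner_Integration.integrable_bound[OF g])
    show "f \<in> borel_measurable (G \<sigma>)" by (rule G_meas[OF sig f])
    show "AE x in G \<sigma>. norm (f x) \<le> norm (g x)"
      by (intro AE_I2) (use b in \<open>auto intro: order_trans[OF _ abs_ge_self]\<close>)
  qed
qed

lemma G_const: "integrable (G \<sigma>) (\<lambda>_. c::real)"
  by (rule G_bounded_integrable[OF sig, where B="\<bar>c\<bar>"]) auto

lemma risk1_deriv:
  assumes l: "l > 0"
  shows "((\<lambda>t. \<integral>x. (ST (\<mu> + x) t - \<mu>)\<^sup>2 \<partial>G \<sigma>) has_real_derivative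
           (\<integral>x. 2 * (ST (\<mu> + x) l - \<mu>) * dST (\<mu> + x) l \<partial>G \<sigma>)) (at l)"
proof (rule DCT_deriv[where \<delta>="l/2" and H="\<lambda>x. 2 * \<bar>x\<bar> + 3 * l"])
  show "(\<lambda>x. (ST (\<mu> + x) t - \<mu>)\<^sup>2) \<in> borel_measurable (G \<sigma>)" for t by measurable
  show "(\<lambda>x. 2 * (ST (\<mu> + x) l - \<mu>) * dST (\<mu> + x) l) \<in> borel_measurable (G \<sigma>)" by measurable
  show "integrable (G \<sigma>) (\<lambda>x. 2 * \<bar>x\<bar> + 3 * l)"
    by (intro Bochner_Integration.integrable_add integrable_mult_right G_absx[OF sig] G_const)
  show "l / 2 > 0" using l by simp
  fix t assume t: "\<bar>t - l\<bar> < l / 2"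
  then have t0: "0 \<le> t" "t \<le> 2 * l" using l by (auto simp: abs_if split: if_splits)
  have close: "\<bar>ST (\<mu> + x) s - \<mu>\<bar> \<le> \<bar>x\<bar> + s" if "0 \<le> s" for x s
    using ST_close[OF that, of "\<mu> + x"] by linarith
  show "integrable (G \<sigma>) (\<lambda>x. (ST (\<mu> + x) t - \<mu>)\<^sup>2)"
  proof (rule G_integrable_bound)
    show "(\<lambda>x. (ST (\<mu> + x) t - \<mu>)\<^sup>2) \<in> borel_measurable borel" by measurable
    show "integrable (G \<sigma>) (\<lambda>x. 2 * x\<^sup>2 + 2 * t\<^sup>2)"
      by (intro Bochner_Integration.integrable_add integrable_mult_right G_x2[OF sig] G_const)
    fix x
    have "\<bar>(ST (\<mu> + x) t - \<mu>)\<^sup>2\<bar> = \<bar>ST (\<mu> + x) t - \<mu>\<bar>\<^sup>2" by simp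
    also have "\<dots> \<le> (\<bar>x\<bar> + t)\<^sup>2" using close[OF t0(1), of x] by (intro power_mono) auto
    also have "\<dots> \<le> 2 * x\<^sup>2 + 2 * t\<^sup>2"
      using sum_squares_ge_zero[of "\<bar>x\<bar> - t" 0] by (simp add: power2_eq_square algebra_simps)
    finally show "\<bar>(ST (\<mu> + x) t - \<mu>)\<^sup>2\<bar> \<le> 2 * x\<^sup>2 + 2 * t\<^sup>2" .
  qed
  fix x
  have d: "\<bar>ST (\<mu> + x) t - ST (\<mu> + x) l\<bar> \<le> \<bar>t - l\<bar>" by (rule ST_lip) (use t0 l in auto)
  have s: "\<bar>(ST (\<mu> + x) t - \<mu>) + (ST (\<mu> + x) l - \<mu>)\<bar> \<le> 2 * \<bar>x\<bar> + 3 * l"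
    using close[OF t0(1), of x] close[of l x] l t by linarith
  have "\<bar>(ST (\<mu> + x) t - \<mu>)\<^sup>2 - (ST (\<mu> + x) l - \<mu>)\<^sup>2\<bar>
      = \<bar>ST (\<mu> + x) t - ST (\<mu> + x) l\<bar> * \<bar>(ST (\<mu> + x) t - \<mu>) + (ST (\<mu> + x) l - \<mu>)\<bar>"
    by (simp add: power2_eq_square abs_mult[symmetric] algebra_simps)
  also have "\<dots> \<le> \<bar>t - l\<bar> * (2 * \<bar>x\<bar> + 3 * l)"
    by (intro mult_mono d s) auto
  finally show "\<bar>(ST (\<mu> + x) t - \<mu>)\<^sup>2 - (ST (\<mu> + x) l - \<mu>)\<^sup>2\<bar> \<le> \<bar>t - l\<bar> * (2 * \<bar>x\<bar> + 3 * l)" .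
next
  show "AE x in G \<sigma>. ((\<lambda>t. (ST (\<mu> + x) t - \<mu>)\<^sup>2) has_real_derivative 2 * (ST (\<mu> + x) l - \<mu>) * dST (\<mu> + x) l) (at l)"
    using AE_G_ne[of \<mu> l]
  proof eventually_elim
    case (elim x)
    show ?case
      using DERIV_power[OF DERIV_diff[OF ST_deriv[OF l elim] DERIV_const[of \<mu>]], of 2]
      by (simp add: power2_eq_square algebra_simps)
  qed
qed

end

context fixes \<sigma> :: real assumes sig: "0 < \<sigma>"
begin

lemma dof1_deriv:
  assumes l: "l > 0"
  shows "((\<lambda>t. \<integral>x. x * ST (\<mu> + x) t \<partial>G \<sigma>) has_real_derivative
           (\<integral>x. x * dST (\<mu> + x) l \<partial>G \<sigma>)) (at l)"
proof (rule DCT_deriv[where \<delta>="l/2" and H="\<lambda>x. \<bar>x\<bar>"])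
  show "(\<lambda>x. x * ST (\<mu> + x) t) \<in> borel_measurable (G \<sigma>)" for t by measurable
  show "(\<lambda>x. x * dST (\<mu> + x) l) \<in> borel_measurable (G \<sigma>)" by measurable
  show "integrable (G \<sigma>) (\<lambda>x. \<bar>x\<bar>)" by (rule G_absx[OF sig])
  show "l / 2 > 0" using l by simp
  fix t assume t: "\<bar>t - l\<bar> < l / 2"
  then have t0: "0 \<le> t" using l by (auto simp: abs_if split: if_splits)
  show "integrable (G \<sigma>) (\<lambda>x. x * ST (\<mu> + x) t)"
  proof (rule G_integrable_bound[OF sig])
    show "(\<lambda>x. x * ST (\<mu> + x) t) \<in> borel_measurable borel" by measurable
    show "integrable (G \<sigma>) (\<lambda>x. x\<^sup>2 + (\<bar>\<mu>\<bar> + t) * \<bar>x\<bar>)"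
      by (intro Bochner_Integration.integrable_add integrable_mult_right G_x2[OF sig] G_absx[OF sig])
    fix x
    have "\<bar>ST (\<mu> + x) t\<bar> \<le> \<bar>x\<bar> + (\<bar>\<mu>\<bar> + t)" using ST_close[OF t0, of "\<mu> + x"] by linarith
    then have "\<bar>x\<bar> * \<bar>ST (\<mu> + x) t\<bar> \<le> \<bar>x\<bar> * (\<bar>x\<bar> + (\<bar>\<mu>\<bar> + t))" by (intro mult_left_mono) auto
    then show "\<bar>x * ST (\<mu> + x) t\<bar> \<le> x\<^sup>2 + (\<bar>\<mu>\<bar> + t) * \<bar>x\<bar>"
      by (simp add: abs_mult power2_eq_square algebra_simps)
  qed
  fix x
  have d: "\<bar>ST (\<mu> + x) t - ST (\<mu> + x) l\<bar> \<le> \<bar>t - l\<bar>" by (rule ST_lip) (use t0 l in auto)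
  have "\<bar>x * ST (\<mu> + x) t - x * ST (\<mu> + x) l\<bar> = \<bar>x\<bar> * \<bar>ST (\<mu> + x) t - ST (\<mu> + x) l\<bar>"
    by (simp add: abs_mult[symmetric] algebra_simps)
  also have "\<dots> \<le> \<bar>x\<bar> * \<bar>t - l\<bar>" by (intro mult_left_mono d) auto
  finally show "\<bar>x * ST (\<mu> + x) t - x * ST (\<mu> + x) l\<bar> \<le> \<bar>t - l\<bar> * \<bar>x\<bar>" by (simp add: mult.commute)
next
  show "AE x in G \<sigma>. ((\<lambda>t. x * ST (\<mu> + x) t) has_real_derivative x * dST (\<mu> + x) l) (at l)"
    using AE_G_ne[OF sig, of \<mu> l]
  proof eventually_elim
    case (elim x)
    show ?case using DERIV_cmult[OF ST_deriv[OF l elim], of x] by simp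
  qed
qed

lemma xdST_integrable: "integrable (G \<sigma>) (\<lambda>x. x * dST (\<mu> + x) l)"
proof (rule G_integrable_bound[OF sig])
  show "(\<lambda>x. x * dST (\<mu> + x) l) \<in> borel_measurable borel" by measurable
  show "integrable (G \<sigma>) (\<lambda>x. \<bar>x\<bar>)" by (rule G_absx[OF sig])
  fix x show "\<bar>x * dST (\<mu> + x) l\<bar> \<le> \<bar>x\<bar>"
    using dST_bound[of "\<mu> + x" l] by (simp add: abs_mult mult_left_le)
qed

lemma xdST_value:
  assumes l: "l > 0"
  shows "(\<integral>x. x * dST (\<mu> + x) l \<partial>G \<sigma>) = - (\<sigma>\<^sup>2 * (normal_density 0 \<sigma> (l - \<mu>) + normal_density 0 \<sigma> (- l - \<mu>)))"
proof -
  have intf: "integrable lborel (\<lambda>x. normal_density 0 \<sigma> x * x)"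
    by (rule integrable_normal_moment_nz_1) (rule sig)
  have pw: "normal_density 0 \<sigma> x * (x * dST (\<mu> + x) l)
      = normal_density 0 \<sigma> x * x * indicator {..< - l - \<mu>} x - normal_density 0 \<sigma> x * x * indicator {l - \<mu><..} x" for x
    using l unfolding dST_def by (auto simp: sgn_if split: split_indicator)
  have "(\<integral>x. x * dST (\<mu> + x) l \<partial>G \<sigma>) = (\<integral>x. normal_density 0 \<sigma> x * (x * dST (\<mu> + x) l) \<partial>lborel)"
    by (rule G_int[OF sig]) measurable
  also have "\<dots> = (\<integral>x. normal_density 0 \<sigma> x * x * indicator {..< - l - \<mu>} x - normal_density 0 \<sigma> x * x * indicator {l - \<mu><..} x \<partial>lborel)"
    unfolding pw ..
  also have "\<dots> = - (\<sigma>\<^sup>2 * normal_density 0 \<sigma> (- l - \<mu>)) - \<sigma>\<^sup>2 * normal_density 0 \<sigma> (l - \<mu>)"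
    by (subst Bochner_Integration.integral_diff)
       (auto intro!: integrable_real_mult_indicator intf simp: lower_moment[OF sig] tail_moment[OF sig])
  finally show ?thesis by (simp add: algebra_simps)
qed

lemma A_bound: "0 \<le> l \<Longrightarrow> \<bar>dST y l * (ST y l - y)\<bar> \<le> l"
  unfolding dST_def ST_def by (auto simp: sgn_if abs_if)

end

lemma FD_pw:
  assumes "0 < \<epsilon>" "\<epsilon> < 2 * l"
  shows "dST (\<mu> + x + \<epsilon>) l - dST (\<mu> + x) l = - (indicator {l - \<mu> - \<epsilon><..l - \<mu>} x + indicator {- l - \<mu> - \<epsilon>..<- l - \<mu>} x)"
  using assms unfolding dST_def by (auto simp: sgn_if split: split_indicator)

context fixes \<sigma> :: real assumes sig: "0 < \<sigma>"
begin

lemma FD_mean: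
  assumes e: "0 < \<epsilon>" "\<epsilon> < 2 * l"
  shows "\<bar>integral\<^sup>L (G \<sigma>) (\<lambda>x. (dST (\<mu> + x + \<epsilon>) l - dST (\<mu> + x) l) / \<epsilon>)
          + (normal_density 0 \<sigma> (l - \<mu>) + normal_density 0 \<sigma> (- l - \<mu>))\<bar> \<le> 2 * Lphi \<sigma> * \<epsilon>"
proof -
  define S1 where "S1 = {l - \<mu> - \<epsilon><..l - \<mu>}"
  define S2 where "S2 = {- l - \<mu> - \<epsilon>..<- l - \<mu>}"
  define P1 where "P1 = (\<integral>x. normal_density 0 \<sigma> x * indicator S1 x \<partial>lborel)"
  define P2 where "P2 = (\<integral>x. normal_density 0 \<sigma> x * indicator S2 x \<partial>lborel)"
  have a1: "\<bar>P1 - \<epsilon> * normal_density 0 \<sigma> (l - \<mu>)\<bar> \<le> Lphi \<sigma> * \<epsilon>\<^sup>2"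
    unfolding P1_def by (rule interval_approx[OF sig]) (use e in \<open>auto simp: S1_def\<close>)
  have a2: "\<bar>P2 - \<epsilon> * normal_density 0 \<sigma> (- l - \<mu>)\<bar> \<le> Lphi \<sigma> * \<epsilon>\<^sup>2"
    unfolding P2_def by (rule interval_approx[OF sig]) (use e in \<open>auto simp: S2_def\<close>)
  have i1: "integrable lborel (\<lambda>x. normal_density 0 \<sigma> x * indicator S1 x)"
    using sig by (intro integrable_real_mult_indicator) (auto intro: integrable_normal_density simp: S1_def)
  have i2: "integrable lborel (\<lambda>x. normal_density 0 \<sigma> x * indicator S2 x)"
    using sig by (intro integrable_real_mult_indicator) (auto intro: integrable_normal_density simp: S2_def)
  have "integral\<^sup>L (G \<sigma>) (\<lambda>x. (dST (\<mu> + x + \<epsilon>) l - dST (\<mu> + x) l) / \<epsilon>)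
      = (\<integral>x. normal_density 0 \<sigma> x * ((dST (\<mu> + x + \<epsilon>) l - dST (\<mu> + x) l) / \<epsilon>) \<partial>lborel)"
    by (rule G_int[OF sig]) measurable
  also have "\<dots> = (\<integral>x. - (normal_density 0 \<sigma> x * indicator S1 x + normal_density 0 \<sigma> x * indicator S2 x) / \<epsilon> \<partial>lborel)"
    unfolding FD_pw[OF e] S1_def S2_def by (simp add: algebra_simps)
  also have "\<dots> = - (P1 + P2) / \<epsilon>"
    using i1 i2 by (simp add: P1_def P2_def)
  finally have eq: "integral\<^sup>L (G \<sigma>) (\<lambda>x. (dST (\<mu> + x + \<epsilon>) l - dST (\<mu> + x) l) / \<epsilon>) = - (P1 + P2) / \<epsilon>" .
  have "- (P1 + P2) / \<epsilon> + (normal_density 0 \<sigma> (l - \<mu>) + normal_density 0 \<sigma> (- l - \<mu>))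
      = - ((P1 - \<epsilon> * normal_density 0 \<sigma> (l - \<mu>)) + (P2 - \<epsilon> * normal_density 0 \<sigma> (- l - \<mu>))) / \<epsilon>"
    using e by (simp add: field_simps)
  also have "\<bar>\<dots>\<bar> \<le> (Lphi \<sigma> * \<epsilon>\<^sup>2 + Lphi \<sigma> * \<epsilon>\<^sup>2) / \<epsilon>"
    using a1 a2 e by (simp add: abs_divide divide_right_mono abs_triangle_ineq[THEN order_trans])
  also have "\<dots> = 2 * Lphi \<sigma> * \<epsilon>" using e by (simp add: power2_eq_square)
  finally show ?thesis unfolding eq .
qed

lemma FD_sq:
  assumes e: "0 < \<epsilon>" "\<epsilon> < 2 * l"
  shows "integral\<^sup>L (G \<sigma>) (\<lambda>x. ((dST (\<mu> + x + \<epsilon>) l - dST (\<mu> + x) l) / \<epsilon>)\<^sup>2) \<le> 2 / (sqrt (2 * pi * \<sigma>\<^sup>2) * \<epsilon>)"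
proof -
  define S1 where "S1 = {l - \<mu> - \<epsilon><..l - \<mu>}"
  define S2 where "S2 = {- l - \<mu> - \<epsilon>..<- l - \<mu>}"
  define P1 where "P1 = (\<integral>x. normal_density 0 \<sigma> x * indicator S1 x \<partial>lborel)"
  define P2 where "P2 = (\<integral>x. normal_density 0 \<sigma> x * indicator S2 x \<partial>lborel)"
  have a1: "P1 \<le> \<epsilon> / sqrt (2 * pi * \<sigma>\<^sup>2)"
    unfolding P1_def by (rule interval_upper[OF sig]) (use e in \<open>auto simp: S1_def intro: less_imp_le\<close>)
  have a2: "P2 \<le> \<epsilon> / sqrt (2 * pi * \<sigma>\<^sup>2)"
    unfolding P2_def by (rule interval_upper[OF sig]) (use e in \<open>auto simp: S2_def\<close>)
  have i1: "integrable lborel (\<lambda>x. normal_density 0 \<sigma> x * indicator S1 x)"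
    using sig by (intro integrable_real_mult_indicator) (auto intro: integrable_normal_density simp: S1_def)
  have i2: "integrable lborel (\<lambda>x. normal_density 0 \<sigma> x * indicator S2 x)"
    using sig by (intro integrable_real_mult_indicator) (auto intro: integrable_normal_density simp: S2_def)
  have disj: "S1 \<inter> S2 = {}" using e by (auto simp: S1_def S2_def)
  have pw: "((dST (\<mu> + x + \<epsilon>) l - dST (\<mu> + x) l) / \<epsilon>)\<^sup>2 = (indicator S1 x + indicator S2 x) / \<epsilon>\<^sup>2" for x
  proof -
    have "(- (indicator S1 x + indicator S2 x) :: real)\<^sup>2 = indicator S1 x + indicator S2 x"
      using disj by (auto split: split_indicator)
    then show ?thesis unfolding FD_pw[OF e] S1_def[symmetric] S2_def[symmetric]
      by (simp only: power_divide)
  qed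
  have "integral\<^sup>L (G \<sigma>) (\<lambda>x. ((dST (\<mu> + x + \<epsilon>) l - dST (\<mu> + x) l) / \<epsilon>)\<^sup>2)
      = (\<integral>x. normal_density 0 \<sigma> x * (((dST (\<mu> + x + \<epsilon>) l - dST (\<mu> + x) l) / \<epsilon>)\<^sup>2) \<partial>lborel)"
    by (rule G_int[OF sig]) measurable
  also have "\<dots> = (\<integral>x. (normal_density 0 \<sigma> x * indicator S1 x + normal_density 0 \<sigma> x * indicator S2 x) / \<epsilon>\<^sup>2 \<partial>lborel)"
    unfolding pw by (simp add: algebra_simps)
  also have "\<dots> = (P1 + P2) / \<epsilon>\<^sup>2"
    using i1 i2 by (simp add: P1_def P2_def)
  also have "\<dots> \<le> (\<epsilon> / sqrt (2 * pi * \<sigma>\<^sup>2) + \<epsilon> / sqrt (2 * pi * \<sigma>\<^sup>2)) / \<epsilon>\<^sup>2"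
    using a1 a2 by (intro divide_right_mono) auto
  also have "\<dots> = 2 / (sqrt (2 * pi * \<sigma>\<^sup>2) * \<epsilon>)" using e by (simp add: power2_eq_square field_simps)
  finally show ?thesis .
qed

end

lemma ST_close_all: "\<bar>ST y t - y\<bar> \<le> \<bar>t\<bar>"
  unfolding ST_def by (auto simp: abs_if)

context fixes \<sigma> :: real assumes sig: "0 < \<sigma>"
begin

lemma sq_integrable: "integrable (G \<sigma>) (\<lambda>x. (ST (\<mu> + x) t - \<mu>)\<^sup>2)"
proof (rule G_integrable_bound[OF sig])
  show "(\<lambda>x. (ST (\<mu> + x) t - \<mu>)\<^sup>2) \<in> borel_measurable borel" by measurable
  show "integrable (G \<sigma>) (\<lambda>x. 2 * x\<^sup>2 + 2 * t\<^sup>2)"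
    by (intro Bochner_Integration.integrable_add integrable_mult_right G_x2[OF sig] G_const[OF sig])
  fix x
  have c: "\<bar>ST (\<mu> + x) t - \<mu>\<bar> \<le> \<bar>x\<bar> + \<bar>t\<bar>" using ST_close_all[of "\<mu> + x" t] by linarith
  have "\<bar>(ST (\<mu> + x) t - \<mu>)\<^sup>2\<bar> = \<bar>ST (\<mu> + x) t - \<mu>\<bar>\<^sup>2" by simp
  also have "\<dots> \<le> (\<bar>x\<bar> + \<bar>t\<bar>)\<^sup>2" using c by (intro power_mono) auto
  also have "\<dots> \<le> 2 * x\<^sup>2 + 2 * t\<^sup>2"
    using sum_squares_ge_zero[of "\<bar>x\<bar> - \<bar>t\<bar>" 0] by (simp add: power2_eq_square algebra_simps)
  finally show "\<bar>(ST (\<mu> + x) t - \<mu>)\<^sup>2\<bar> \<le> 2 * x\<^sup>2 + 2 * t\<^sup>2" .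
qed

lemma xST_integrable: "integrable (G \<sigma>) (\<lambda>x. x * ST (\<mu> + x) t)"
proof (rule G_integrable_bound[OF sig])
  show "(\<lambda>x. x * ST (\<mu> + x) t) \<in> borel_measurable borel" by measurable
  show "integrable (G \<sigma>) (\<lambda>x. x\<^sup>2 + (\<bar>\<mu>\<bar> + \<bar>t\<bar>) * \<bar>x\<bar>)"
    by (intro Bochner_Integration.integrable_add integrable_mult_right G_x2[OF sig] G_absx[OF sig])
  fix x
  have "\<bar>ST (\<mu> + x) t\<bar> \<le> \<bar>x\<bar> + (\<bar>\<mu>\<bar> + \<bar>t\<bar>)" using ST_close_all[of "\<mu> + x" t] by linarith
  then have "\<bar>x\<bar> * \<bar>ST (\<mu> + x) t\<bar> \<le> \<bar>x\<bar> * (\<bar>x\<bar> + (\<bar>\<mu>\<bar> + \<bar>t\<bar>))" by (intro mult_left_mono) auto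
  then show "\<bar>x * ST (\<mu> + x) t\<bar> \<le> x\<^sup>2 + (\<bar>\<mu>\<bar> + \<bar>t\<bar>) * \<bar>x\<bar>"
    by (simp add: abs_mult power2_eq_square algebra_simps)
qed

lemma ST_integrable: "integrable (G \<sigma>) (\<lambda>x. ST (\<mu> + x) t)"
proof (rule G_integrable_bound[OF sig])
  show "(\<lambda>x. ST (\<mu> + x) t) \<in> borel_measurable borel" by measurable
  show "integrable (G \<sigma>) (\<lambda>x. \<bar>x\<bar> + (\<bar>\<mu>\<bar> + \<bar>t\<bar>))"
    by (intro Bochner_Integration.integrable_add G_absx[OF sig] G_const[OF sig])
  fix x show "\<bar>ST (\<mu> + x) t\<bar> \<le> \<bar>x\<bar> + (\<bar>\<mu>\<bar> + \<bar>t\<bar>)" using ST_close_all[of "\<mu> + x" t] by linarith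
qed

lemma risk_sum: "risk P \<sigma> m t = (\<Sum>i<P. \<integral>x. (ST (m i + x) t - m i)\<^sup>2 \<partial>G \<sigma>)"
proof -
  have "risk P \<sigma> m t = (\<Sum>i<P. \<integral>w. (ST (m i + w i) t - m i)\<^sup>2 \<partial>noise P \<sigma>)"
    unfolding risk_def
  proof (rule Bochner_Integration.integral_sum)
    fix i assume i: "i \<in> {..<P}"
    show "integrable (noise P \<sigma>) (\<lambda>w. (ST (m i + w i) t - m i)\<^sup>2)"
      using noise_comp_integrable[OF sig, of i P "\<lambda>x. (ST (m i + x) t - m i)\<^sup>2"] i sq_integrable by simp
  qed
  also have "\<dots> = (\<Sum>i<P. \<integral>x. (ST (m i + x) t - m i)\<^sup>2 \<partial>G \<sigma>)"
    by (rule sum.cong[OF refl]) (rule noise_comp_int[OF sig]; simp)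
  finally show ?thesis .
qed

lemma cov_eq:
  assumes i: "i < P"
  shows "cov (noise P \<sigma>) (\<lambda>w. m i + w i) (\<lambda>w. ST (m i + w i) t) = (\<integral>x. x * ST (m i + x) t \<partial>G \<sigma>)"
proof -
  interpret Gp: prob_space "G \<sigma>" by (rule G_prob[OF sig])
  have pU: "measure (G \<sigma>) UNIV = 1" using Gp.prob_space by simp
  have EX: "(\<integral>v. m i + v i \<partial>noise P \<sigma>) = m i"
  proof -
    have "(\<integral>v. m i + v i \<partial>noise P \<sigma>) = (\<integral>x. m i + x \<partial>G \<sigma>)"
      by (rule noise_comp_int[OF sig i]) simp
    also have "\<dots> = m i" using G_x[OF sig] G_mean[OF sig] G_const[OF sig] by (simp add: pU)
    finally show ?thesis .
  qed
  define c where "c = (\<integral>v. ST (m i + v i) t \<partial>noise P \<sigma>)"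
  have "cov (noise P \<sigma>) (\<lambda>w. m i + w i) (\<lambda>w. ST (m i + w i) t)
      = (\<integral>w. (m i + w i - m i) * (ST (m i + w i) t - c) \<partial>noise P \<sigma>)"
    unfolding cov_def EX c_def ..
  also have "\<dots> = (\<integral>x. (m i + x - m i) * (ST (m i + x) t - c) \<partial>G \<sigma>)"
    by (rule noise_comp_int[OF sig i]) simp
  also have "\<dots> = (\<integral>x. x * ST (m i + x) t - c * x \<partial>G \<sigma>)"
    by (simp add: algebra_simps)
  also have "\<dots> = (\<integral>x. x * ST (m i + x) t \<partial>G \<sigma>)"
    using xST_integrable[of "m i" t] G_x[OF sig] G_mean[OF sig] by simp
  finally show ?thesis .
qed

lemma dof_sum: "dof P \<sigma> m t = (\<Sum>i<P. \<integral>x. x * ST (m i + x) t \<partial>G \<sigma>) / \<sigma>\<^sup>2"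
  unfolding dof_def by (simp add: cov_eq)

lemma deriv_risk:
  assumes l: "l > 0"
  shows "deriv (\<lambda>t. risk P \<sigma> m t) l = (\<Sum>i<P. \<integral>x. 2 * (ST (m i + x) l - m i) * dST (m i + x) l \<partial>G \<sigma>)"
  unfolding risk_sum by (intro DERIV_imp_deriv DERIV_sum risk1_deriv[OF sig l])

lemma deriv_dof:
  assumes l: "l > 0"
  shows "deriv (\<lambda>t. dof P \<sigma> m t) l = (\<Sum>i<P. \<integral>x. x * dST (m i + x) l \<partial>G \<sigma>) / \<sigma>\<^sup>2"
  unfolding dof_sum by (intro DERIV_imp_deriv DERIV_cdivide DERIV_sum dof1_deriv[OF sig l])

end

context fixes \<sigma> :: real assumes sig: "0 < \<sigma>"
begin

lemma sum_meas:
  assumes "\<And>i. (F i :: real \<Rightarrow> real) \<in> borel_measurable borel"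
  shows "{w \<in> space (noise P \<sigma>). c \<le> \<bar>\<Sum>i<P. F i (w i) - k i\<bar>} \<in> sets (noise P \<sigma>)"
proof -
  have "(\<lambda>w. \<Sum>i<P. F i (w i) - k i) \<in> borel_measurable (noise P \<sigma>)"
  proof (intro borel_measurable_sum)
    fix i assume "i \<in> {..<P}"
    then show "(\<lambda>w. F i (w i) - k i) \<in> borel_measurable (noise P \<sigma>)"
      using noise_comp_meas2[OF sig, of i P "\<lambda>x. F i x - k i"] assms by auto
  qed
  then show ?thesis by measurable
qed

lemma df_decomp:
  fixes m :: "nat \<Rightarrow> real"
  assumes l: "l > 0" and e: "0 < \<epsilon>" "\<epsilon> < 2 * l"
  defines "Fd \<equiv> \<lambda>i x. (dST (m i + x + \<epsilon>) l - dST (m i + x) l) / \<epsilon>"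
  shows "grad_df_FD P (\<lambda>i. m i + w i) l \<epsilon> - deriv (\<lambda>t. dof P \<sigma> m t) l
    = (\<Sum>i<P. Fd i (w i) - integral\<^sup>L (G \<sigma>) (Fd i))
      + (\<Sum>i<P. integral\<^sup>L (G \<sigma>) (Fd i) + (normal_density 0 \<sigma> (l - m i) + normal_density 0 \<sigma> (- l - m i)))"
proof -
  have g: "grad_df_FD P (\<lambda>i. m i + w i) l \<epsilon> = (\<Sum>i<P. Fd i (w i))"
    unfolding grad_df_FD_def Fd_def by (simp add: sum_distrib_left sum_divide_distrib[symmetric])
  have d: "deriv (\<lambda>t. dof P \<sigma> m t) l = - (\<Sum>i<P. (normal_density 0 \<sigma> (l - m i) + normal_density 0 \<sigma> (- l - m i)))"
    unfolding deriv_dof[OF sig l] xdST_value[OF sig l] using sig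
    by (simp add: sum_divide_distrib sum_subtractf sum.distrib sum_negf)
  show ?thesis unfolding g d by (simp add: sum_subtractf sum.distrib sum_negf algebra_simps)
qed

lemma bound_df:
  fixes m :: "nat \<Rightarrow> real"
  assumes P: "P > 0" and l: "l > 0" and e: "0 < \<epsilon>" "\<epsilon> < 2 * l" and ee: "e > 0"
    and small: "2 * Lphi \<sigma> * \<epsilon> \<le> e / 2"
  shows "measure (noise P \<sigma>) {w \<in> space (noise P \<sigma>). e < \<bar>(grad_df_FD P (\<lambda>i. m i + w i) l \<epsilon> - deriv (\<lambda>t. dof P \<sigma> m t) l) / real P\<bar>}
    \<le> 8 / (sqrt (2 * pi * \<sigma>\<^sup>2) * e\<^sup>2) * (1 / (real P * \<epsilon>))"
proof -
  define Fd where "Fd = (\<lambda>i x. (dST (m i + x + \<epsilon>) l - dST (m i + x) l) / \<epsilon>)"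
  define U where "U w = (\<Sum>i<P. Fd i (w i) - integral\<^sup>L (G \<sigma>) (Fd i))" for w
  define c where "c = (\<Sum>i<P. integral\<^sup>L (G \<sigma>) (Fd i) + (normal_density 0 \<sigma> (l - m i) + normal_density 0 \<sigma> (- l - m i)))"
  have Fdm: "Fd i \<in> borel_measurable borel" for i unfolding Fd_def by measurable
  have Fdb: "\<bar>Fd i x\<bar> \<le> 2 / \<epsilon>" for i x
  proof -
    have "\<bar>dST (m i + x + \<epsilon>) l - dST (m i + x) l\<bar> \<le> 2"
      using dST_bound[of "m i + x + \<epsilon>" l] dST_bound[of "m i + x" l] by linarith
    then show ?thesis unfolding Fd_def using e by (simp add: abs_divide divide_right_mono)
  qed
  have cb: "\<bar>c\<bar> \<le> real P * (2 * Lphi \<sigma> * \<epsilon>)"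
  proof -
    have "\<bar>c\<bar> \<le> (\<Sum>i<P. \<bar>integral\<^sup>L (G \<sigma>) (Fd i) + (normal_density 0 \<sigma> (l - m i) + normal_density 0 \<sigma> (- l - m i))\<bar>)"
      unfolding c_def by (rule sum_abs)
    also have "\<dots> \<le> (\<Sum>i<P. 2 * Lphi \<sigma> * \<epsilon>)"
      by (intro sum_mono) (unfold Fd_def, rule FD_mean[OF sig e])
    finally show ?thesis by simp
  qed
  have dec: "grad_df_FD P (\<lambda>i. m i + w i) l \<epsilon> - deriv (\<lambda>t. dof P \<sigma> m t) l = U w + c" for w
    unfolding U_def c_def Fd_def by (rule df_decomp[OF l e])
  have sub: "{w \<in> space (noise P \<sigma>). e < \<bar>(grad_df_FD P (\<lambda>i. m i + w i) l \<epsilon> - deriv (\<lambda>t. dof P \<sigma> m t) l) / real P\<bar>}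
      \<subseteq> {w \<in> space (noise P \<sigma>). e * real P / 2 \<le> \<bar>\<Sum>i<P. Fd i (w i) - integral\<^sup>L (G \<sigma>) (Fd i)\<bar>}"
  proof safe
    fix w assume "e < \<bar>(grad_df_FD P (\<lambda>i. m i + w i) l \<epsilon> - deriv (\<lambda>t. dof P \<sigma> m t) l) / real P\<bar>"
    then have "e < \<bar>U w + c\<bar> / real P" unfolding dec by (simp add: abs_divide)
    then have "e * real P < \<bar>U w + c\<bar>" using P by (simp add: pos_less_divide_eq)
    moreover have "real P * (2 * Lphi \<sigma> * \<epsilon>) \<le> real P * (e / 2)" using small by (intro mult_left_mono) auto
    ultimately have "e * real P / 2 \<le> \<bar>U w\<bar>" using cb by (simp add: algebra_simps)
    then show "e * real P / 2 \<le> \<bar>\<Sum>i<P. Fd i (w i) - integral\<^sup>L (G \<sigma>) (Fd i)\<bar>" unfolding U_def .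
  qed
  interpret N: prob_space "noise P \<sigma>" by (rule noise_prob[OF sig])
  have "measure (noise P \<sigma>) {w \<in> space (noise P \<sigma>). e < \<bar>(grad_df_FD P (\<lambda>i. m i + w i) l \<epsilon> - deriv (\<lambda>t. dof P \<sigma> m t) l) / real P\<bar>}
      \<le> measure (noise P \<sigma>) {w \<in> space (noise P \<sigma>). e * real P / 2 \<le> \<bar>\<Sum>i<P. Fd i (w i) - integral\<^sup>L (G \<sigma>) (Fd i)\<bar>}"
    by (rule N.finite_measure_mono[OF sub sum_meas[OF Fdm]])
  also have "\<dots> \<le> (\<Sum>i<P. integral\<^sup>L (G \<sigma>) (\<lambda>x. (Fd i x)\<^sup>2)) / (e * real P / 2)\<^sup>2"
    by (rule conc[OF sig Fdm Fdb]) (use P ee in auto)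
  also have "\<dots> \<le> (\<Sum>i<P. 2 / (sqrt (2 * pi * \<sigma>\<^sup>2) * \<epsilon>)) / (e * real P / 2)\<^sup>2"
    by (intro divide_right_mono sum_mono) (unfold Fd_def, auto intro: FD_sq[OF sig e])
  also have "\<dots> = 8 / (sqrt (2 * pi * \<sigma>\<^sup>2) * e\<^sup>2) * (1 / (real P * \<epsilon>))"
    using P e ee sig by (simp add: power2_eq_square field_simps)
  finally show ?thesis .
qed

end

context fixes \<sigma> :: real assumes sig: "0 < \<sigma>"
begin

lemma c_bound:
  fixes m :: "nat \<Rightarrow> real"
  assumes e: "0 < \<epsilon>" "\<epsilon> < 2 * l"
  shows "\<bar>\<Sum>i<P. integral\<^sup>L (G \<sigma>) (\<lambda>x. (dST (m i + x + \<epsilon>) l - dST (m i + x) l) / \<epsilon>) + (normal_density 0 \<sigma> (l - m i) + normal_density 0 \<sigma> (- l - m i))\<bar>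
     \<le> real P * (2 * Lphi \<sigma> * \<epsilon>)"
proof -
  have "\<bar>\<Sum>i<P. integral\<^sup>L (G \<sigma>) (\<lambda>x. (dST (m i + x + \<epsilon>) l - dST (m i + x) l) / \<epsilon>) + (normal_density 0 \<sigma> (l - m i) + normal_density 0 \<sigma> (- l - m i))\<bar>
      \<le> (\<Sum>i<P. \<bar>integral\<^sup>L (G \<sigma>) (\<lambda>x. (dST (m i + x + \<epsilon>) l - dST (m i + x) l) / \<epsilon>) + (normal_density 0 \<sigma> (l - m i) + normal_density 0 \<sigma> (- l - m i))\<bar>)"
    by (rule sum_abs)
  also have "\<dots> \<le> (\<Sum>i<P. 2 * Lphi \<sigma> * \<epsilon>)"
    by (intro sum_mono FD_mean[OF sig e])
  finally show ?thesis by simp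
qed

lemma risk_term:
  assumes l: "l > 0"
  shows "(\<integral>x. 2 * (ST (\<mu> + x) l - \<mu>) * dST (\<mu> + x) l \<partial>G \<sigma>)
    = 2 * (\<integral>x. dST (\<mu> + x) l * (ST (\<mu> + x) l - (\<mu> + x)) \<partial>G \<sigma>) + 2 * (\<integral>x. x * dST (\<mu> + x) l \<partial>G \<sigma>)"
proof -
  have iA: "integrable (G \<sigma>) (\<lambda>x. dST (\<mu> + x) l * (ST (\<mu> + x) l - (\<mu> + x)))"
    by (rule G_bounded_integrable[OF sig, where B=l]) (use A_bound l in auto)
  have "(\<integral>x. 2 * (ST (\<mu> + x) l - \<mu>) * dST (\<mu> + x) l \<partial>G \<sigma>)
     = (\<integral>x. 2 * (dST (\<mu> + x) l * (ST (\<mu> + x) l - (\<mu> + x))) + 2 * (x * dST (\<mu> + x) l) \<partial>G \<sigma>)"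
    by (simp add: algebra_simps)
  also have "\<dots> = 2 * (\<integral>x. dST (\<mu> + x) l * (ST (\<mu> + x) l - (\<mu> + x)) \<partial>G \<sigma>) + 2 * (\<integral>x. x * dST (\<mu> + x) l \<partial>G \<sigma>)"
    using iA xdST_integrable[OF sig, of \<mu> l] by simp
  finally show ?thesis .
qed

lemma bound_sugar:
  fixes m :: "nat \<Rightarrow> real"
  assumes P: "P > 0" and l: "l > 0" and e: "0 < \<epsilon>" "\<epsilon> < 2 * l" and ee: "e > 0"
    and small: "2 * \<sigma>\<^sup>2 * (2 * Lphi \<sigma> * \<epsilon>) \<le> e / 3"
  shows "measure (noise P \<sigma>) {w \<in> space (noise P \<sigma>). e < \<bar>(SUGAR_FD P \<sigma> (\<lambda>i. m i + w i) l \<epsilon> - deriv (\<lambda>t. risk P \<sigma> m t) l) / real P\<bar>}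
    \<le> 36 * l\<^sup>2 / e\<^sup>2 * (1 / real P) + 72 * \<sigma>\<^sup>2 * \<sigma>\<^sup>2 / (sqrt (2 * pi * \<sigma>\<^sup>2) * e\<^sup>2) * (1 / (real P * \<epsilon>))"
proof -
  define Fd where "Fd = (\<lambda>i x. (dST (m i + x + \<epsilon>) l - dST (m i + x) l) / \<epsilon>)"
  define A where "A = (\<lambda>i x. dST (m i + x) l * (ST (m i + x) l - (m i + x)))"
  define U where "U w = (\<Sum>i<P. Fd i (w i) - integral\<^sup>L (G \<sigma>) (Fd i))" for w
  define V where "V w = (\<Sum>i<P. A i (w i) - integral\<^sup>L (G \<sigma>) (A i))" for w
  define c where "c = (\<Sum>i<P. integral\<^sup>L (G \<sigma>) (Fd i) + (normal_density 0 \<sigma> (l - m i) + normal_density 0 \<sigma> (- l - m i)))"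
  have Fdm: "Fd i \<in> borel_measurable borel" for i unfolding Fd_def by measurable
  have Am: "A i \<in> borel_measurable borel" for i unfolding A_def by measurable
  have Fdb: "\<bar>Fd i x\<bar> \<le> 2 / \<epsilon>" for i x
  proof -
    have "\<bar>dST (m i + x + \<epsilon>) l - dST (m i + x) l\<bar> \<le> 2"
      using dST_bound[of "m i + x + \<epsilon>" l] dST_bound[of "m i + x" l] by linarith
    then show ?thesis unfolding Fd_def using e by (simp add: abs_divide divide_right_mono)
  qed
  have Ab: "\<bar>A i x\<bar> \<le> l" for i x unfolding A_def using A_bound l by auto
  have cb: "\<bar>c\<bar> \<le> real P * (2 * Lphi \<sigma> * \<epsilon>)" unfolding c_def Fd_def by (rule c_bound[OF e])
  have decd: "grad_df_FD P (\<lambda>i. m i + w i) l \<epsilon> - deriv (\<lambda>t. dof P \<sigma> m t) l = U w + c" for w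
    unfolding U_def c_def Fd_def by (rule df_decomp[OF sig l e])
  have dr: "deriv (\<lambda>t. risk P \<sigma> m t) l = 2 * (\<Sum>i<P. integral\<^sup>L (G \<sigma>) (A i)) + 2 * \<sigma>\<^sup>2 * deriv (\<lambda>t. dof P \<sigma> m t) l"
    unfolding deriv_risk[OF sig l] deriv_dof[OF sig l] risk_term[OF l] A_def using sig
    by (simp add: sum.distrib sum_distrib_left sum_divide_distrib)
  have decs: "SUGAR_FD P \<sigma> (\<lambda>i. m i + w i) l \<epsilon> - deriv (\<lambda>t. risk P \<sigma> m t) l = 2 * V w + 2 * \<sigma>\<^sup>2 * (U w + c)" for w
  proof -
    have "SUGAR_FD P \<sigma> (\<lambda>i. m i + w i) l \<epsilon> = 2 * (\<Sum>i<P. A i (w i)) + 2 * \<sigma>\<^sup>2 * grad_df_FD P (\<lambda>i. m i + w i) l \<epsilon>"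
      unfolding SUGAR_FD_def A_def by simp
    then show ?thesis unfolding dr V_def decd[symmetric] by (simp add: sum_subtractf algebra_simps)
  qed
  have sub: "{w \<in> space (noise P \<sigma>). e < \<bar>(SUGAR_FD P \<sigma> (\<lambda>i. m i + w i) l \<epsilon> - deriv (\<lambda>t. risk P \<sigma> m t) l) / real P\<bar>}
      \<subseteq> {w \<in> space (noise P \<sigma>). e * real P / 6 \<le> \<bar>\<Sum>i<P. A i (w i) - integral\<^sup>L (G \<sigma>) (A i)\<bar>}
       \<union> {w \<in> space (noise P \<sigma>). e * real P / (6 * \<sigma>\<^sup>2) \<le> \<bar>\<Sum>i<P. Fd i (w i) - integral\<^sup>L (G \<sigma>) (Fd i)\<bar>}"
  proof safe
    fix w assume w: "w \<in> space (noise P \<sigma>)"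
      and h: "e < \<bar>(SUGAR_FD P \<sigma> (\<lambda>i. m i + w i) l \<epsilon> - deriv (\<lambda>t. risk P \<sigma> m t) l) / real P\<bar>"
      and nU: "\<not> e * real P / (6 * \<sigma>\<^sup>2) \<le> \<bar>\<Sum>i<P. Fd i (w i) - integral\<^sup>L (G \<sigma>) (Fd i)\<bar>"
    have s2: "0 < \<sigma>\<^sup>2" using sig by simp
    from h have "e < \<bar>2 * V w + 2 * \<sigma>\<^sup>2 * (U w + c)\<bar> / real P" unfolding decs by (simp add: abs_divide)
    then have h1: "e * real P < \<bar>2 * V w + 2 * \<sigma>\<^sup>2 * (U w + c)\<bar>" using P by (simp add: pos_less_divide_eq)
    have "\<bar>2 * V w + 2 * \<sigma>\<^sup>2 * (U w + c)\<bar> \<le> 2 * \<bar>V w\<bar> + 2 * \<sigma>\<^sup>2 * \<bar>U w\<bar> + 2 * \<sigma>\<^sup>2 * \<bar>c\<bar>"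
      using s2 by (simp add: abs_mult abs_triangle_ineq[THEN order_trans] distrib_left)
    moreover have "2 * \<sigma>\<^sup>2 * \<bar>c\<bar> \<le> 2 * \<sigma>\<^sup>2 * (real P * (2 * Lphi \<sigma> * \<epsilon>))"
      using cb s2 by (intro mult_left_mono) auto
    moreover have "2 * \<sigma>\<^sup>2 * (real P * (2 * Lphi \<sigma> * \<epsilon>)) \<le> e * real P / 3"
    proof -
      have "2 * \<sigma>\<^sup>2 * (real P * (2 * Lphi \<sigma> * \<epsilon>)) = real P * (2 * \<sigma>\<^sup>2 * (2 * Lphi \<sigma> * \<epsilon>))"
        by (simp add: algebra_simps)
      also have "\<dots> \<le> real P * (e / 3)" using small by (intro mult_left_mono) auto
      finally show ?thesis by (simp add: mult.commute)
    qed
    moreover have "\<sigma>\<^sup>2 * \<bar>U w\<bar> < e * real P / 6"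
      using nU s2 unfolding U_def by (simp add: not_le divide_simps mult.commute)
    then have "2 * \<sigma>\<^sup>2 * \<bar>U w\<bar> < e * real P / 3" by simp
    ultimately have "e * real P / 6 \<le> \<bar>V w\<bar>" using h1 by linarith
    then show "e * real P / 6 \<le> \<bar>\<Sum>i<P. A i (w i) - integral\<^sup>L (G \<sigma>) (A i)\<bar>" unfolding V_def .
  qed
  interpret N: prob_space "noise P \<sigma>" by (rule noise_prob[OF sig])
  have "measure (noise P \<sigma>) {w \<in> space (noise P \<sigma>). e < \<bar>(SUGAR_FD P \<sigma> (\<lambda>i. m i + w i) l \<epsilon> - deriv (\<lambda>t. risk P \<sigma> m t) l) / real P\<bar>}
      \<le> measure (noise P \<sigma>) ({w \<in> space (noise P \<sigma>). e * real P / 6 \<le> \<bar>\<Sum>i<P. A i (w i) - integral\<^sup>L (G \<sigma>) (A i)\<bar>}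
       \<union> {w \<in> space (noise P \<sigma>). e * real P / (6 * \<sigma>\<^sup>2) \<le> \<bar>\<Sum>i<P. Fd i (w i) - integral\<^sup>L (G \<sigma>) (Fd i)\<bar>})"
    by (rule N.finite_measure_mono[OF sub]) (intro sets.Un sum_meas[OF sig Am] sum_meas[OF sig Fdm])
  also have "\<dots> \<le> measure (noise P \<sigma>) {w \<in> space (noise P \<sigma>). e * real P / 6 \<le> \<bar>\<Sum>i<P. A i (w i) - integral\<^sup>L (G \<sigma>) (A i)\<bar>}
       + measure (noise P \<sigma>) {w \<in> space (noise P \<sigma>). e * real P / (6 * \<sigma>\<^sup>2) \<le> \<bar>\<Sum>i<P. Fd i (w i) - integral\<^sup>L (G \<sigma>) (Fd i)\<bar>}"
    by (rule measure_Un_le) (intro sum_meas[OF sig Am] sum_meas[OF sig Fdm])+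
  also have "\<dots> \<le> (\<Sum>i<P. integral\<^sup>L (G \<sigma>) (\<lambda>x. (A i x)\<^sup>2)) / (e * real P / 6)\<^sup>2
       + (\<Sum>i<P. integral\<^sup>L (G \<sigma>) (\<lambda>x. (Fd i x)\<^sup>2)) / (e * real P / (6 * \<sigma>\<^sup>2))\<^sup>2"
    by (intro add_mono conc[OF sig Am Ab] conc[OF sig Fdm Fdb]) (use P ee sig in auto)
  also have "\<dots> \<le> (\<Sum>i<P. l\<^sup>2) / (e * real P / 6)\<^sup>2
       + (\<Sum>i<P. 2 / (sqrt (2 * pi * \<sigma>\<^sup>2) * \<epsilon>)) / (e * real P / (6 * \<sigma>\<^sup>2))\<^sup>2"
  proof (intro add_mono divide_right_mono sum_mono)
    fix i
    interpret Gp: prob_space "G \<sigma>" by (rule G_prob[OF sig])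
    have pU: "measure (G \<sigma>) UNIV = 1" using Gp.prob_space by simp
    have "integral\<^sup>L (G \<sigma>) (\<lambda>x. (A i x)\<^sup>2) \<le> integral\<^sup>L (G \<sigma>) (\<lambda>x. l\<^sup>2)"
    proof (rule integral_mono)
      show "integrable (G \<sigma>) (\<lambda>x. (A i x)\<^sup>2)"
        apply (rule G_bounded_integrable[OF sig, where B="l\<^sup>2"])
        subgoal using Am[of i] by measurable
        subgoal for x using Ab[of i x] l by (simp add: abs_le_square_iff[symmetric])
        done
      show "integrable (G \<sigma>) (\<lambda>x. l\<^sup>2)" by (rule G_const[OF sig])
      fix x show "(A i x)\<^sup>2 \<le> l\<^sup>2" using Ab[of i x] l by (simp add: abs_le_square_iff[symmetric])
    qed
    then show "integral\<^sup>L (G \<sigma>) (\<lambda>x. (A i x)\<^sup>2) \<le> l\<^sup>2" by (simp add: pU)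
    show "integral\<^sup>L (G \<sigma>) (\<lambda>x. (Fd i x)\<^sup>2) \<le> 2 / (sqrt (2 * pi * \<sigma>\<^sup>2) * \<epsilon>)"
      unfolding Fd_def by (rule FD_sq[OF sig e])
  qed auto
  also have "\<dots> = 36 * l\<^sup>2 / e\<^sup>2 * (1 / real P) + 72 * \<sigma>\<^sup>2 * \<sigma>\<^sup>2 / (sqrt (2 * pi * \<sigma>\<^sup>2) * e\<^sup>2) * (1 / (real P * \<epsilon>))"
    using P e ee sig by (simp add: power2_eq_square field_simps)
  finally show ?thesis .
qed

end

theorem theorem2:
  fixes \<sigma> :: real and N :: nat and z0 :: "nat \<Rightarrow> real"
    and \<Psi> :: "nat \<Rightarrow> nat \<Rightarrow> nat \<Rightarrow> real"
    and eps :: "nat \<Rightarrow> real" and l :: real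
  assumes "\<sigma> > 0"
    and "\<forall>P>1. \<exists>j\<le>P. \<forall>i<P. \<forall>c<N. \<Psi> P i c = \<Psi> (Suc P) (if i < j then i else Suc i) c"
    and "\<forall>P. eps P > 0"
    and "eps \<longlonglongrightarrow> 0"
    and "(\<lambda>P. 1 / (real P * eps P)) \<longlonglongrightarrow> 0"
    and "l > 0"
  shows "plim_zero (\<lambda>P. noise P \<sigma>)
           (\<lambda>P w. (SUGAR_FD P \<sigma> (\<lambda>i. mu0 \<Psi> N z0 P i + w i) l (eps P)
                    - deriv (\<lambda>t. risk P \<sigma> (mu0 \<Psi> N z0 P) t) l) / real P)
       \<and> plim_zero (\<lambda>P. noise P \<sigma>)
           (\<lambda>P w. (grad_df_FD P (\<lambda>i. mu0 \<Psi> N z0 P i + w i) l (eps P)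
                    - deriv (\<lambda>t. dof P \<sigma> (mu0 \<Psi> N z0 P) t) l) / real P)"
proof -
  note sig = assms(1) and epos = assms(3) and e0 = assms(4) and ePe = assms(5) and l = assms(6)
  have L: "Lphi \<sigma> > 0" by (rule Lphi_pos[OF sig])
  have s2: "\<sigma>\<^sup>2 > 0" using sig by simp
  have evP: "eventually (\<lambda>P. 0 < P) sequentially" by (rule eventually_gt_at_top)
  have ev1: "eventually (\<lambda>P. eps P < 2 * l) sequentially"
    using order_tendstoD(2)[OF e0, of "2 * l"] l by simp
  have evd: "eventually (\<lambda>P. eps P < d) sequentially" if "d > 0" for d
    using order_tendstoD(2)[OF e0, of d] that by simp
  have lim1: "(\<lambda>P. K * (1 / (real P * eps P))) \<longlonglongrightarrow> 0" for K
    using tendsto_mult[OF tendsto_const[of K] ePe] by simp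
  have lim2: "(\<lambda>P. K * (1 / real P)) \<longlonglongrightarrow> 0" for K
    using tendsto_mult[OF tendsto_const[of K] lim_1_over_n] by simp
  show ?thesis
  proof
    show "plim_zero (\<lambda>P. noise P \<sigma>)
           (\<lambda>P w. (SUGAR_FD P \<sigma> (\<lambda>i. mu0 \<Psi> N z0 P i + w i) l (eps P)
                    - deriv (\<lambda>t. risk P \<sigma> (mu0 \<Psi> N z0 P) t) l) / real P)"
      unfolding plim_zero_def
    proof (intro allI impI)
      fix e :: real assume e: "e > 0"
      define d where "d = e / (12 * \<sigma>\<^sup>2 * Lphi \<sigma>)"
      have d: "d > 0" unfolding d_def using e L s2 by simp
      have limB: "(\<lambda>P. 36 * l\<^sup>2 / e\<^sup>2 * (1 / real P) + 72 * \<sigma>\<^sup>2 * \<sigma>\<^sup>2 / (sqrt (2 * pi * \<sigma>\<^sup>2) * e\<^sup>2) * (1 / (real P * eps P))) \<longlonglongrightarrow> 0"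
        by (rule tendsto_add_zero[OF lim2 lim1])
      show "(\<lambda>P. measure (noise P \<sigma>) {w \<in> space (noise P \<sigma>). \<bar>(SUGAR_FD P \<sigma> (\<lambda>i. mu0 \<Psi> N z0 P i + w i) l (eps P)
                    - deriv (\<lambda>t. risk P \<sigma> (mu0 \<Psi> N z0 P) t) l) / real P\<bar> > e}) \<longlonglongrightarrow> 0"
      proof (rule tendsto_sandwich[OF _ _ tendsto_const limB])
        show "eventually (\<lambda>P. 0 \<le> measure (noise P \<sigma>) {w \<in> space (noise P \<sigma>). \<bar>(SUGAR_FD P \<sigma> (\<lambda>i. mu0 \<Psi> N z0 P i + w i) l (eps P)
                    - deriv (\<lambda>t. risk P \<sigma> (mu0 \<Psi> N z0 P) t) l) / real P\<bar> > e}) sequentially"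
          by simp
        show "eventually (\<lambda>P. measure (noise P \<sigma>) {w \<in> space (noise P \<sigma>). \<bar>(SUGAR_FD P \<sigma> (\<lambda>i. mu0 \<Psi> N z0 P i + w i) l (eps P)
                    - deriv (\<lambda>t. risk P \<sigma> (mu0 \<Psi> N z0 P) t) l) / real P\<bar> > e}
              \<le> 36 * l\<^sup>2 / e\<^sup>2 * (1 / real P) + 72 * \<sigma>\<^sup>2 * \<sigma>\<^sup>2 / (sqrt (2 * pi * \<sigma>\<^sup>2) * e\<^sup>2) * (1 / (real P * eps P))) sequentially"
          using evP ev1 evd[OF d]
        proof eventually_elim
          case (elim P)
          have small: "2 * \<sigma>\<^sup>2 * (2 * Lphi \<sigma> * eps P) \<le> e / 3"
          proof -
            have "2 * \<sigma>\<^sup>2 * (2 * Lphi \<sigma> * eps P) = (4 * \<sigma>\<^sup>2 * Lphi \<sigma>) * eps P" by simp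
            also have "\<dots> \<le> (4 * \<sigma>\<^sup>2 * Lphi \<sigma>) * d" using elim L s2 by (intro mult_left_mono) auto
            also have "\<dots> = e / 3" unfolding d_def using L s2 by (simp add: field_simps)
            finally show ?thesis .
          qed
          show ?case
            by (rule bound_sugar[OF sig elim(1) l epos[rule_format] elim(2) e small])
        qed
      qed
    qed
  next
    show "plim_zero (\<lambda>P. noise P \<sigma>)
           (\<lambda>P w. (grad_df_FD P (\<lambda>i. mu0 \<Psi> N z0 P i + w i) l (eps P)
                    - deriv (\<lambda>t. dof P \<sigma> (mu0 \<Psi> N z0 P) t) l) / real P)"
      unfolding plim_zero_def
    proof (intro allI impI)
      fix e :: real assume e: "e > 0"
      define d where "d = e / (4 * Lphi \<sigma>)"
      have d: "d > 0" unfolding d_def using e L by simp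
      show "(\<lambda>P. measure (noise P \<sigma>) {w \<in> space (noise P \<sigma>). \<bar>(grad_df_FD P (\<lambda>i. mu0 \<Psi> N z0 P i + w i) l (eps P)
                    - deriv (\<lambda>t. dof P \<sigma> (mu0 \<Psi> N z0 P) t) l) / real P\<bar> > e}) \<longlonglongrightarrow> 0"
      proof (rule tendsto_sandwich[OF _ _ tendsto_const lim1])
        show "eventually (\<lambda>P. 0 \<le> measure (noise P \<sigma>) {w \<in> space (noise P \<sigma>). \<bar>(grad_df_FD P (\<lambda>i. mu0 \<Psi> N z0 P i + w i) l (eps P)
                    - deriv (\<lambda>t. dof P \<sigma> (mu0 \<Psi> N z0 P) t) l) / real P\<bar> > e}) sequentially"
          by simp
        show "eventually (\<lambda>P. measure (noise P \<sigma>) {w \<in> space (noise P \<sigma>). \<bar>(grad_df_FD P (\<lambda>i. mu0 \<Psi> N z0 P i + w i) l (eps P)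
                    - deriv (\<lambda>t. dof P \<sigma> (mu0 \<Psi> N z0 P) t) l) / real P\<bar> > e}
              \<le> 8 / (sqrt (2 * pi * \<sigma>\<^sup>2) * e\<^sup>2) * (1 / (real P * eps P))) sequentially"
          using evP ev1 evd[OF d]
        proof eventually_elim
          case (elim P)
          have small: "2 * Lphi \<sigma> * eps P \<le> e / 2"
          proof -
            have "2 * Lphi \<sigma> * eps P \<le> 2 * Lphi \<sigma> * d" using elim L by (intro mult_left_mono) auto
            also have "\<dots> = e / 2" unfolding d_def using L by (simp add: field_simps)
            finally show ?thesis .
          qed
          show ?case
            by (rule bound_df[OF sig elim(1) l epos[rule_format] elim(2) e small])
        qed
      qed
    qed
  qed
qed

end
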